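(* Let $C^{u}(x,y,t;z)=\sum_{\nu\in\mathcal{CP}^{u}}x^{v(\nu)}y^{h(\nu)}t^{a(\nu)}z^{c(\nu)}$ and let $$z_0=z_0(x,y)=\frac{1+y-x-\sqrt{(1+y-x)^2-4y}}{2y}.$$ Then $$C^{u}(x,y,1;z)=\frac{xy(z_0-z)+\frac{x^2y^2z(1-z)}{(1-yz)^2-x}-\frac{x^2y^2z_0(1-z_0)}{(1-yz_0)^2-x}}{(1-z)(1-yz)+xz}.$$
   Context: A cell is a unit square in the plane whose center is an integer point and whose sides are parallel to the axes. A polyomino is a finite set of cells which is connected under edge-adjacency; polyominoes are considered up to translation. A column (resp. row) is the set of cells whose centers have a fixed $x$- (resp. $y$-) coordinate; a polyomino is convex if each column and each row is a contiguous block of cells. Number the columns $1,2,\dots$ from left to right; $u(\nu,j)$ denotes the height (center $y$-coordinate) of the top cell of column $j$. $\mathcal{CP}^{u}$ is the set of nonempty convex polyominoes $\nu$ such that for every column $j$ and every $s\ge j+1$, $u(\nu,s)\le u(\nu,j)$. For $\nu$: $v(\nu)$ = number of columns, $h(\nu)$ = number of rows, $a(\nu)$ = number of cells, $c(\nu)$ = number of cells in the first (leftmost) column minus $1$. *)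

theory Defs
  imports "HOL-Analysis.Analysis"
begin

type_synonym cell = "int \<times> int"   (* (x,y) = centre of the unit cell *)

definition edge_adj :: "cell \<Rightarrow> cell \<Rightarrow> bool" where
  "edge_adj p q \<longleftrightarrow> \<bar>fst p - fst q\<bar> + \<bar>snd p - snd q\<bar> = 1"

definition polyomino :: "cell set \<Rightarrow> bool" where
  "polyomino P \<longleftrightarrow> finite P \<and> P \<noteq> {} \<and>
     (\<forall>p\<in>P. \<forall>q\<in>P. (\<lambda>a b. a \<in> P \<and> b \<in> P \<and> edge_adj a b)\<^sup>*\<^sup>* p q)"

definition convex_poly :: "cell set \<Rightarrow> bool" where
  "convex_poly P \<longleftrightarrow> polyomino P \<and>
     (\<forall>a y1 y2 y. (a, y1) \<in> P \<and> (a, y2) \<in> P \<and> y1 \<le> y \<and> y \<le> y2 \<longrightarrow> (a, y) \<in> P) \<and>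
     (\<forall>b x1 x2 x. (x1, b) \<in> P \<and> (x2, b) \<in> P \<and> x1 \<le> x \<and> x \<le> x2 \<longrightarrow> (x, b) \<in> P)"

(* canonical representative of a translation class: leftmost column at x = 0, bottom row at y = 0 *)
definition normalized :: "cell set \<Rightarrow> bool" where
  "normalized P \<longleftrightarrow> (\<forall>(a,b)\<in>P. 0 \<le> a \<and> 0 \<le> b) \<and> (\<exists>b. (0, b) \<in> P) \<and> (\<exists>a. (a, 0) \<in> P)"

definition columns :: "cell set \<Rightarrow> int set" where
  "columns P = fst ` P"

definition rows :: "cell set \<Rightarrow> int set" where
  "rows P = snd ` P"

definition col_top :: "cell set \<Rightarrow> int \<Rightarrow> int" where
  "col_top P a = Max {y. (a, y) \<in> P}"

definition CPu :: "cell set set" where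
  "CPu = {P. convex_poly P \<and> normalized P \<and>
           (\<forall>j\<in>columns P. \<forall>s\<in>columns P. j < s \<longrightarrow> col_top P s \<le> col_top P j)}"

definition v_stat :: "cell set \<Rightarrow> nat" where "v_stat P = card (columns P)"
definition h_stat :: "cell set \<Rightarrow> nat" where "h_stat P = card (rows P)"
definition a_stat :: "cell set \<Rightarrow> nat" where "a_stat P = card P"
definition c_stat :: "cell set \<Rightarrow> nat" where
  "c_stat P = card {y. (Min (columns P), y) \<in> P} - 1"

definition z0 :: "real \<Rightarrow> real \<Rightarrow> real" where
  "z0 x y = (1 + y - x - sqrt ((1 + y - x)^2 - 4*y)) / (2*y)"

end

theory Submission
  imports Defs
begin


fun good :: "(int \<times> int) list \<Rightarrow> bool" where
  "good [] = False"
| "good [p] = (fst p \<le> snd p)"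
| "good (p # q # r) = (fst p \<le> snd p \<and> snd q \<le> snd p \<and> fst p \<le> snd q \<and> good (q # r) \<and>
      (fst q \<le> fst p \<or> (\<forall>s\<in>set (q # r). fst q \<le> fst s)))"

definition LL :: "(int \<times> int) list set" where
  "LL = {cs. good cs \<and> (\<forall>p\<in>set cs. 0 \<le> fst p) \<and> (\<exists>p\<in>set cs. fst p = 0)}"

definition LF :: "(int \<times> int) list set" where
  "LF = {cs \<in> LL. fst (hd cs) = 0}"

definition topT :: "(int \<times> int) list \<Rightarrow> nat" where
  "topT cs = nat (snd (hd cs))"

definition cnn :: "(int \<times> int) list \<Rightarrow> nat" where
  "cnn cs = nat (snd (hd cs) - fst (hd cs))"

definition wt :: "real \<Rightarrow> real \<Rightarrow> real \<Rightarrow> (int \<times> int) list \<Rightarrow> real" where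
  "wt x y z cs = x ^ length cs * y ^ (topT cs + 1) * z ^ cnn cs"

definition shl :: "int \<Rightarrow> (int \<times> int) list \<Rightarrow> (int \<times> int) list" where
  "shl d cs = map (\<lambda>(b,t). (b + d, t + d)) cs"

definition gm :: "(int \<times> int) list \<Rightarrow> nat \<Rightarrow> nat \<Rightarrow> (int \<times> int) list" where
  "gm cs i u = (snd (hd cs) - int i, snd (hd cs) + int u) # cs"

definition ge :: "(int \<times> int) list \<Rightarrow> nat \<Rightarrow> nat \<Rightarrow> (int \<times> int) list" where
  "ge cs u d = (0, snd (hd cs) + int d + int u) # shl (int d) cs"

definition gmp :: "(int \<times> int) list \<times> nat \<times> nat \<Rightarrow> (int \<times> int) list" where
  "gmp = (\<lambda>(cs,(i,u)). gm cs i u)"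

definition gep :: "(int \<times> int) list \<times> nat \<times> nat \<Rightarrow> (int \<times> int) list" where
  "gep = (\<lambda>(cs,(u,d)). ge cs u d)"

definition QM :: "(int \<times> int) list set \<Rightarrow> ((int \<times> int) list \<times> nat \<times> nat) set" where
  "QM A = Sigma A (\<lambda>cs. {..cnn cs} \<times> UNIV)"

definition QMF :: "(int \<times> int) list set \<Rightarrow> ((int \<times> int) list \<times> nat \<times> nat) set" where
  "QMF A = Sigma (A \<inter> LF) (\<lambda>cs. {cnn cs} \<times> UNIV)"

definition QE :: "(int \<times> int) list set \<Rightarrow> ((int \<times> int) list \<times> nat \<times> nat) set" where
  "QE A = Sigma (A \<inter> LF) (\<lambda>cs. UNIV \<times> {1..})"

definition L1 :: "(int \<times> int) list set" where
  "L1 = range (\<lambda>t::nat. [(0, int t)])"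

lemma good_shl: "good (shl d cs) = good cs"
  by (induction cs rule: good.induct) (auto simp: shl_def)

lemma shl_shl: "shl a (shl b cs) = shl (a + b) cs"
  by (induction cs) (auto simp: shl_def)

lemma shl_0[simp]: "shl 0 cs = cs"
  by (induction cs) (auto simp: shl_def)

lemma good_nonempty: "good cs \<Longrightarrow> cs \<noteq> []"
  by auto

lemma good_props: "good cs \<Longrightarrow> \<forall>p\<in>set cs. fst p \<le> snd p \<and> snd p \<le> snd (hd cs)"
  by (induction cs rule: good.induct) auto

lemma good_tl: "good (p # q # r) \<Longrightarrow> good (q # r)"
  by simp

lemma gm_LL:
  assumes "cs \<in> LL" "i \<le> cnn cs"
  shows "gm cs i u \<in> LL"
proof -
  obtain q r where cs: "cs = q # r" using assms by (cases cs) (auto simp: LL_def)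
  have g: "good cs" "\<forall>p\<in>set cs. 0 \<le> fst p" "\<exists>p\<in>set cs. fst p = 0" using assms by (auto simp: LL_def)
  have "fst q \<le> snd q" using g cs good_props by auto
  then show ?thesis using g assms(2) cs
    by (auto simp: LL_def gm_def cnn_def)
qed

lemma ge_LF:
  assumes "cs \<in> LF" "1 \<le> d"
  shows "ge cs u d \<in> LF"
proof -
  obtain q r where cs: "cs = q # r" using assms by (cases cs) (auto simp: LF_def LL_def)
  have g: "good cs" "\<forall>p\<in>set cs. 0 \<le> fst p" "fst q = 0" using assms cs by (auto simp: LF_def LL_def)
  have "0 \<le> snd q" using g cs good_props[of cs] by auto
  moreover have "good (shl (int d) cs)" using g good_shl by auto
  ultimately show ?thesis using g cs
    by (auto simp: LF_def LL_def ge_def shl_def split: prod.splits)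
qed

lemma LL_hd: "cs \<in> LL \<Longrightarrow> 0 \<le> fst (hd cs) \<and> fst (hd cs) \<le> snd (hd cs)"
  using good_props[of cs] by (cases cs) (auto simp: LL_def)

lemma length_gm[simp]: "length (gm cs i u) = Suc (length cs)" by (simp add: gm_def)
lemma length_ge[simp]: "length (ge cs u d) = Suc (length cs)" by (simp add: ge_def shl_def)

lemma decomp:
  assumes "cs' \<in> LL" "2 \<le> length cs'"
  shows "(\<exists>cs i u. cs \<in> LL \<and> i \<le> cnn cs \<and> length cs' = Suc (length cs) \<and> cs' = gm cs i u) \<or>
         (\<exists>cs u d. cs \<in> LF \<and> 1 \<le> d \<and> length cs' = Suc (length cs) \<and> cs' = ge cs u d)"
proof -
  obtain p q r where cs': "cs' = p # q # r" using assms(2)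
    by (metis One_nat_def Suc_1 Suc_le_length_iff)
  have g: "good cs'" "\<forall>s\<in>set cs'. 0 \<le> fst s" "\<exists>s\<in>set cs'. fst s = 0" using assms by (auto simp: LL_def)
  have gg: "fst p \<le> snd p" "snd q \<le> snd p" "fst p \<le> snd q" "good (q # r)"
     "fst q \<le> fst p \<or> (\<forall>s\<in>set (q # r). fst q \<le> fst s)" using g cs' by auto
  show ?thesis
  proof (cases "\<exists>s\<in>set (q # r). fst s = 0")
    case True
    have R: "q # r \<in> LL" using True g cs' gg by (auto simp: LL_def)
    have "fst q \<le> fst p" using gg(5) True g cs' by force
    then have "nat (snd q - fst p) \<le> cnn (q # r)" by (auto simp: cnn_def)
    moreover have "cs' = gm (q # r) (nat (snd q - fst p)) (nat (snd p - snd q))"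
      using gg cs' by (cases p) (auto simp: gm_def)
    ultimately show ?thesis using R cs'
      apply (intro disjI1)
      apply (rule exI[of _ "q # r"], rule exI[of _ "nat (snd q - fst p)"], rule exI[of _ "nat (snd p - snd q)"])
      by simp
  next
    case False
    have p0: "fst p = 0" using False g cs' by auto
    have q0: "0 < fst q" using False g cs' by force
    have all: "\<forall>s\<in>set (q # r). fst q \<le> fst s" using gg(5) p0 q0 by auto
    define cs where "cs = shl (- fst q) (q # r)"
    have "good cs" using gg good_shl cs_def by auto
    moreover have "\<forall>s\<in>set cs. 0 \<le> fst s" using all by (auto simp: cs_def shl_def split: prod.splits)
    moreover have "fst (hd cs) = 0" by (auto simp: cs_def shl_def split: prod.splits)
    ultimately have csF: "cs \<in> LF" by (cases cs) (auto simp: LF_def LL_def)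
    have "shl (int (nat (fst q))) cs = q # r" using q0 by (simp add: cs_def shl_shl)
    moreover have "snd (hd cs) + int (nat (fst q)) + int (nat (snd p - snd q)) = snd p"
      using q0 gg by (auto simp: cs_def shl_def split: prod.splits)
    ultimately have "cs' = ge cs (nat (snd p - snd q)) (nat (fst q))"
      using cs' p0 by (cases p) (auto simp: ge_def)
    moreover have "length cs' = Suc (length cs)" using cs' by (simp add: cs_def shl_def)
    moreover have "1 \<le> nat (fst q)" using q0 by linarith
    ultimately show ?thesis using csF by blast
  qed
qed


lemma shl_inv: "shl (- d) (shl d cs) = cs"
  by (simp add: shl_shl)

lemma inj_gmp: "inj_on gmp X"
  by (rule inj_onI) (auto simp: gmp_def gm_def split: prod.splits)

lemma inj_gep: "inj_on gep (QE A)"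
proof (rule inj_onI)
  fix a b assume a: "a \<in> QE A" and b: "b \<in> QE A" and e: "gep a = gep b"
  obtain cs u d where a': "a = (cs,(u,d))" by (metis prod.exhaust)
  obtain cs2 u2 d2 where b': "b = (cs2,(u2,d2))" by (metis prod.exhaust)
  have F: "cs \<in> LF" "cs2 \<in> LF" using a b a' b' by (auto simp: QE_def)
  then obtain q r q2 r2 where c: "cs = q # r" "cs2 = q2 # r2" by (cases cs; cases cs2) (auto simp: LF_def LL_def)
  have e2: "(0, snd q + int d + int u) = (0, snd q2 + int d2 + int u2)" "shl (int d) cs = shl (int d2) cs2"
    using e a' b' c by (auto simp: gep_def ge_def)
  have "fst (hd (shl (int d) cs)) = int d" "fst (hd (shl (int d2) cs2)) = int d2"
    using F c by (auto simp: LF_def shl_def split: prod.splits)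
  then have dd: "d = d2" using e2 by simp
  then have "cs = cs2" using e2 shl_inv by metis
  then show "a = b" using a' b' e2 dd c by auto
qed

lemma gm_ge_disj:
  assumes "cs \<in> LL" "1 \<le> d" "cs2 \<in> LL" shows "gm cs i u \<noteq> ge cs2 u2 d"
proof
  assume "gm cs i u = ge cs2 u2 d"
  then have "cs = shl (int d) cs2" by (simp add: gm_def ge_def)
  moreover obtain s where "s \<in> set cs" "fst s = 0" using assms by (auto simp: LL_def)
  moreover have "\<forall>s\<in>set (shl (int d) cs2). fst s \<ge> int d"
    using assms(3) by (auto simp: shl_def LL_def)
  ultimately show False using assms by force
qed

lemma LL_len: "cs \<in> LL \<Longrightarrow> Suc 0 \<le> length cs"
  by (cases cs) (auto simp: LL_def)

lemma L1_eq: "L1 = {cs \<in> LL. length cs = 1}"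
proof (rule set_eqI, rule iffI)
  fix cs assume "cs \<in> L1" then show "cs \<in> {cs \<in> LL. length cs = 1}" by (auto simp: L1_def LL_def)
next
  fix cs assume a: "cs \<in> {cs \<in> LL. length cs = 1}"
  then obtain p where "cs = [p]" by (cases cs) auto
  moreover have "fst p = 0" "0 \<le> snd p" using a calculation by (auto simp: LL_def)
  ultimately have "cs = [(0, int (nat (snd p)))]" by (cases p) auto
  then show "cs \<in> L1" unfolding L1_def by (metis rangeI)
qed

lemma L1_LF: "L1 \<subseteq> LF"
  by (auto simp: L1_def LF_def LL_def)

lemma gmp_QM: "A \<subseteq> LL \<Longrightarrow> gmp ` QM A \<subseteq> LL"
  using gm_LL by (auto simp: gmp_def QM_def)

lemma gep_QE: "gep ` QE A \<subseteq> LF"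
  using ge_LF by (auto simp: gep_def QE_def)

lemma LF_LL: "LF \<subseteq> LL" by (auto simp: LF_def)

lemma gm_LF_iff:
  assumes "cs \<in> LL" "i \<le> cnn cs"
  shows "gm cs i u \<in> LF \<longleftrightarrow> cs \<in> LF \<and> i = cnn cs"
  using assms LL_hd[of cs] gm_LL[OF assms, of u] by (auto simp: LF_def gm_def cnn_def)

lemma decomp_len:
  "{cs \<in> LL. length cs = Suc (Suc n)} = gmp ` QM {cs\<in>LL. length cs = Suc n} \<union> gep ` QE {cs\<in>LL. length cs = Suc n}"
  (is "?L = ?R")
proof
  show "?L \<subseteq> ?R"
  proof
    fix cs' assume a: "cs' \<in> ?L"
    then have "cs' \<in> LL" "2 \<le> length cs'" by auto
    from decomp[OF this] a show "cs' \<in> ?R"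
      by (auto simp: gmp_def gep_def QM_def QE_def image_iff LF_def) fastforce+
  qed
next
  show "?R \<subseteq> ?L" using gm_LL ge_LF LF_LL
    by (auto simp: gmp_def gep_def QM_def QE_def)
qed

lemma decomp_all:
  "{cs \<in> LL. 2 \<le> length cs} = gmp ` QM LL \<union> gep ` QE LL"
  (is "?L = ?R")
proof
  show "?L \<subseteq> ?R"
  proof
    fix cs' assume a: "cs' \<in> ?L"
    then have "cs' \<in> LL" "2 \<le> length cs'" by auto
    from decomp[OF this] a show "cs' \<in> ?R"
      by (auto simp: gmp_def gep_def QM_def QE_def image_iff LF_def) fastforce+
  qed
next
  show "?R \<subseteq> ?L" using gm_LL ge_LF LF_LL LL_len
    by (auto simp: gmp_def gep_def QM_def QE_def)
qed

lemma decomp_F: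
  "{cs \<in> LF. 2 \<le> length cs} = gmp ` QMF LL \<union> gep ` QE LL"
  (is "?L = ?R")
proof
  show "?L \<subseteq> ?R"
  proof
    fix cs' assume a: "cs' \<in> ?L"
    then have "cs' \<in> LL" "2 \<le> length cs'" by (auto simp: LF_def)
    from decomp[OF this] show "cs' \<in> ?R"
    proof
      assume "\<exists>cs i u. cs \<in> LL \<and> i \<le> cnn cs \<and> length cs' = Suc (length cs) \<and> cs' = gm cs i u"
      then obtain cs i u where "cs \<in> LL" "i \<le> cnn cs" "cs' = gm cs i u" by blast
      moreover then have "cs \<in> LF" "i = cnn cs" using gm_LF_iff a by auto
      ultimately show ?thesis by (auto simp: gmp_def QMF_def image_iff)
    next
      assume "\<exists>cs u d. cs \<in> LF \<and> 1 \<le> d \<and> length cs' = Suc (length cs) \<and> cs' = ge cs u d"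
      then show ?thesis by (auto simp: gep_def QE_def image_iff LF_def)
    qed
  qed
next
  show "?R \<subseteq> ?L"
  proof
    fix cs' assume "cs' \<in> ?R"
    then show "cs' \<in> ?L"
    proof
      assume "cs' \<in> gmp ` QMF LL"
      then obtain cs u where "cs \<in> LF" "cs' = gm cs (cnn cs) u" by (auto simp: gmp_def QMF_def)
      then show ?thesis using gm_LF_iff[of cs "cnn cs" u] LF_LL LL_len by auto
    next
      assume "cs' \<in> gep ` QE LL"
      then show ?thesis using ge_LF LL_len LF_LL by (auto simp: gep_def QE_def)
    qed
  qed
qed

lemma disj_gm_ge: "A \<subseteq> LL \<Longrightarrow> B \<subseteq> LL \<Longrightarrow> gmp ` QM A \<inter> gep ` QE B = {}"
  using gm_ge_disj LF_LL by (fastforce simp: gmp_def gep_def QM_def QE_def)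

lemma disj_gmF_ge: "A \<subseteq> LL \<Longrightarrow> B \<subseteq> LL \<Longrightarrow> gmp ` QMF A \<inter> gep ` QE B = {}"
  using gm_ge_disj LF_LL by (fastforce simp: gmp_def gep_def QMF_def QE_def)

lemma wt_gm:
  assumes "cs \<in> LL" "i \<le> cnn cs"
  shows "wt x y z (gm cs i u) = x * (x ^ length cs * y ^ (topT cs + 1)) * z ^ i * (y * z) ^ u"
proof -
  have h: "0 \<le> fst (hd cs)" "fst (hd cs) \<le> snd (hd cs)" using LL_hd[OF assms(1)] by auto
  have "topT (gm cs i u) = topT cs + u" using h by (simp add: topT_def gm_def nat_add_distrib)
  moreover have "cnn (gm cs i u) = i + u" using h assms(2) by (simp add: cnn_def gm_def)
  ultimately show ?thesis by (simp add: wt_def power_add power_mult_distrib)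
qed

lemma wt_ge:
  assumes "cs \<in> LF"
  shows "wt x y z (ge cs u d) = x * wt x y z cs * (y * z) ^ u * (y * z) ^ d"
proof -
  have h: "fst (hd cs) = 0" "0 \<le> snd (hd cs)" using assms LL_hd[of cs] by (auto simp: LF_def)
  have "topT (ge cs u d) = topT cs + d + u" using h by (simp add: topT_def ge_def nat_add_distrib)
  moreover have "cnn (ge cs u d) = topT cs + d + u" using h by (simp add: cnn_def topT_def ge_def nat_add_distrib)
  moreover have "cnn cs = topT cs" using h by (simp add: cnn_def topT_def)
  moreover have "length (ge cs u d) = Suc (length cs)" by simp
  ultimately show ?thesis by (simp add: wt_def power_add power_mult_distrib del: length_ge)
qed

lemma wt_L1: "wt x y z [(0, int t)] = x * y * (y * z) ^ t"
  by (simp add: wt_def topT_def cnn_def power_mult_distrib)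



lemma has_sum_geom: fixes w :: real assumes "\<bar>w\<bar> < 1"
  shows "((\<lambda>n. w ^ n) has_sum (1 / (1 - w))) UNIV"
proof -
  have "(\<lambda>n. w ^ n) sums (1 / (1 - w))" using geometric_sums[of w] assms by auto
  moreover have "summable (\<lambda>n. norm (w ^ n))" using assms
    by (auto simp: power_abs intro!: summable_geometric)
  ultimately show ?thesis by (intro norm_summable_imp_has_sum)
qed

lemma has_sum_prod_real:
  fixes f :: "'a \<Rightarrow> real" and g :: "'b \<Rightarrow> real"
  assumes f: "(f has_sum a) A" and g: "(g has_sum b) B"
  shows "((\<lambda>(i,j). f i * g j) has_sum (a * b)) (A \<times> B)"
proof -
  have sf: "(\<lambda>i. norm (f i)) summable_on A"
    using f has_sum_imp_summable summable_on_iff_abs_summable_on_real by blast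
  have sg: "(\<lambda>i. norm (g i)) summable_on B"
    using g has_sum_imp_summable summable_on_iff_abs_summable_on_real by blast
  have "(\<lambda>x. norm ((\<lambda>(i,j). f i * g j) x)) summable_on (Sigma A (\<lambda>_. B))"
  proof (rule iffD2[OF Infinite_Sum.abs_summable_on_Sigma_iff], intro conjI ballI)
    fix i assume "i \<in> A"
    show "(\<lambda>j. norm (case (i, j) of (i, j) \<Rightarrow> f i * g j)) summable_on B"
      using summable_on_cmult_right[OF sg, of "norm (f i)"] by (simp add: abs_mult)
  next
    have "(\<lambda>i. norm (f i) * infsum (\<lambda>j. norm (g j)) B) summable_on A"
      using summable_on_cmult_left[OF sf] by simp
    moreover have "(\<Sum>\<^sub>\<infinity>j\<in>B. norm (case (i, j) of (i, j) \<Rightarrow> f i * g j)) = norm (f i) * infsum (\<lambda>j. norm (g j)) B" for i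
      by (simp add: abs_mult infsum_cmult_right')
    ultimately show "(\<lambda>i. norm (\<Sum>\<^sub>\<infinity>j\<in>B. norm (case (i, j) of (i, j) \<Rightarrow> f i * g j))) summable_on A"
      by (simp add: infsum_nonneg)
  qed
  then have sm: "(\<lambda>(i,j). f i * g j) summable_on Sigma A (\<lambda>_. B)"
    using abs_summable_summable by blast
  have "((\<lambda>(i,j). f i * g j) has_sum (a * b)) (Sigma A (\<lambda>_. B))"
  proof (rule has_sum_SigmaI[where g = "\<lambda>i. f i * b"])
    show "((\<lambda>j. case (i, j) of (i, j) \<Rightarrow> f i * g j) has_sum f i * b) B" for i
      using has_sum_cmult_right[OF g] by simp
    show "((\<lambda>i. f i * b) has_sum a * b) A" using has_sum_cmult_left[OF f] by simp
  qed (use sm in auto)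
  then show ?thesis by simp
qed

lemma I1: fixes z w :: real assumes "\<bar>w\<bar> < 1"
  shows "((\<lambda>(i,u). z ^ i * w ^ u) has_sum ((\<Sum>i\<le>c. z ^ i) * (1 / (1 - w)))) ({..c} \<times> UNIV)"
  by (rule has_sum_prod_real[OF has_sum_finite has_sum_geom[OF assms]]) simp

lemma I3: fixes z w :: real assumes "\<bar>w\<bar> < 1"
  shows "((\<lambda>(i,u). z ^ i * w ^ u) has_sum (z ^ c * (1 / (1 - w)))) ({c} \<times> UNIV)"
  using has_sum_prod_real[OF has_sum_finite[of "{c}" "\<lambda>i. z ^ i"] has_sum_geom[OF assms]] by simp

lemma I2: fixes w :: real assumes "\<bar>w\<bar> < 1"
  shows "((\<lambda>(u,d). w ^ u * w ^ d) has_sum (1 / (1 - w) * (w / (1 - w)))) (UNIV \<times> {1..})"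
  by (rule has_sum_prod_real[OF has_sum_geom[OF assms] has_sum_geometric_from_1]) (use assms in auto)

lemma sigma_sum:
  fixes f :: "'c \<Rightarrow> real"
  assumes "f summable_on (h ` Sigma A B)" "inj_on h (Sigma A B)"
    "\<And>a. a \<in> A \<Longrightarrow> ((\<lambda>b. f (h (a,b))) has_sum g a) (B a)"
  shows "(g has_sum infsum f (h ` Sigma A B)) A"
proof -
  have "(f has_sum infsum f (h ` Sigma A B)) (h ` Sigma A B)" using assms(1) by simp
  then have "((f \<circ> h) has_sum infsum f (h ` Sigma A B)) (Sigma A B)"
    using has_sum_reindex[OF assms(2)] by blast
  then show ?thesis by (rule has_sum_SigmaD) (use assms(3) in auto)
qed



definition Ln :: "nat \<Rightarrow> (int \<times> int) list set" where
  "Ln k = {cs \<in> LL. length cs = k}"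

lemma wt_nonneg: "0 \<le> x \<Longrightarrow> 0 \<le> y \<Longrightarrow> 0 \<le> z \<Longrightarrow> 0 \<le> wt x y z cs"
  by (simp add: wt_def)

lemma sum_L1: fixes x y z :: real assumes "\<bar>y*z\<bar> < 1"
  shows "(wt x y z has_sum (x*y*(1/(1-y*z)))) L1"
proof -
  have "((\<lambda>t. x*y*(y*z)^t) has_sum (x*y*(1/(1-y*z)))) UNIV"
    using has_sum_cmult_right[OF has_sum_geom[OF assms]] by simp
  then have "((wt x y z \<circ> (\<lambda>t::nat. [(0, int t)])) has_sum (x*y*(1/(1-y*z)))) UNIV"
    by (simp add: o_def wt_L1)
  moreover have "inj (\<lambda>t::nat. [(0, int t)])" by (rule injI) auto
  ultimately show ?thesis unfolding L1_def using has_sum_reindex by blast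
qed

lemma sum_pow2_le: "(\<Sum>i\<le>c. (2::real) ^ i) \<le> 2 * 2 ^ c"
  by (induction c) auto

lemma K_bound: fixes X Y :: real assumes "0 \<le> X" "X \<le> 1/100" "0 \<le> Y" "Y \<le> 1/100"
  shows "2*X/(1-2*Y) + X*(1/(1-2*Y)*(2*Y/(1-2*Y))) \<le> 1/2"
proof -
  have a: "1/(1-2*Y) \<le> 2" "0 \<le> 1/(1-2*Y)" using assms by (auto simp: field_simps)
  have "2*X/(1-2*Y) = 2*X*(1/(1-2*Y))" by simp
  also have "\<dots> \<le> 2*X*2" using a assms by (intro mult_left_mono) auto
  finally have b: "2*X/(1-2*Y) \<le> 4*X" by simp
  have "2*Y/(1-2*Y) = 2*Y*(1/(1-2*Y))" by simp
  also have "\<dots> \<le> 2*Y*2" using a assms by (intro mult_left_mono) auto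
  finally have c: "2*Y/(1-2*Y) \<le> 4*Y" by simp
  have "1/(1-2*Y)*(2*Y/(1-2*Y)) \<le> 2 * (4*Y)" using a c assms
    by (intro mult_mono) auto
  then have "X*(1/(1-2*Y)*(2*Y/(1-2*Y))) \<le> X * (8*Y)" using assms by (intro mult_left_mono) auto
  moreover have "X * (8*Y) \<le> 1/100" using assms mult_mono[of X "1/100" "8*Y" "8/100"] by auto
  ultimately show ?thesis using b assms by linarith
qed

lemma summ_step:
  fixes X Y :: real
  assumes XY: "0 \<le> X" "X \<le> 1/100" "0 \<le> Y" "Y \<le> 1/100"
  assumes sA: "wt X Y 2 summable_on Ln (Suc n)" and bA: "infsum (wt X Y 2) (Ln (Suc n)) \<le> (1/2)^n"
  shows "wt X Y 2 summable_on Ln (Suc (Suc n)) \<and> infsum (wt X Y 2) (Ln (Suc (Suc n))) \<le> (1/2)^(Suc n)"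
proof -
  define A where "A = Ln (Suc n)"
  define W where "W = wt X Y 2"
  have AL: "A \<subseteq> LL" by (auto simp: A_def Ln_def)
  have w1: "\<bar>Y*2\<bar> < 1" using XY by auto
  define K1 where "K1 = 2*X/(1-2*Y)"
  define K2 where "K2 = X*(1/(1-2*Y)*(2*Y/(1-2*Y)))"
  have K: "K1 + K2 \<le> 1/2" "0 \<le> K1" "0 \<le> K2" using K_bound[OF XY] XY by (auto simp: K1_def K2_def)
  have Wn: "0 \<le> W cs" for cs using XY by (simp add: W_def wt_nonneg)
  define gM where "gM cs = X * (X ^ length cs * Y ^ (topT cs + 1)) * ((\<Sum>i\<le>cnn cs. (2::real) ^ i) * (1 / (1 - Y*2)))" for cs
  have inM: "((\<lambda>p. W (gmp (cs, p))) has_sum gM cs) ({..cnn cs} \<times> UNIV)" if "cs \<in> A" for cs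
  proof -
    have "((\<lambda>(i,u). X * (X ^ length cs * Y ^ (topT cs + 1)) * ((2::real) ^ i * (Y*2) ^ u)) has_sum gM cs) ({..cnn cs} \<times> UNIV)"
      unfolding gM_def using has_sum_cmult_right[OF I1[OF w1, of 2 "cnn cs"]] by (simp add: case_prod_unfold)
    then show ?thesis
      by (rule has_sum_cong[THEN iffD1, rotated])
         (use that AL in \<open>auto simp: W_def gmp_def wt_gm mult.commute mult.left_commute\<close>)
  qed
  have gMle: "gM cs \<le> K1 * W cs" for cs
  proof -
    have "gM cs = X * (X ^ length cs * Y ^ (topT cs + 1)) * (\<Sum>i\<le>cnn cs. (2::real) ^ i) * (1 / (1 - 2*Y))"
      by (simp add: gM_def mult.commute)
    also have "\<dots> \<le> X * (X ^ length cs * Y ^ (topT cs + 1)) * (2 * 2 ^ cnn cs) * (1 / (1 - 2*Y))"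
      using XY sum_pow2_le[of "cnn cs"] by (intro mult_right_mono mult_left_mono) auto
    also have "\<dots> = K1 * W cs" by (simp add: K1_def W_def wt_def)
    finally show ?thesis .
  qed
  have gMn: "0 \<le> gM cs" for cs using XY by (simp add: gM_def sum_nonneg)
  have sgM: "gM summable_on A"
    using summable_on_comparison_test[OF summable_on_cmult_right[OF sA[folded A_def W_def], of K1]] gMle gMn by blast
  have sQM: "(\<lambda>p. W (gmp p)) summable_on QM A"
    unfolding QM_def by (rule summable_on_SigmaI[where g = gM]) (use inM sgM Wn in auto)
  have hQM: "((\<lambda>p. W (gmp p)) has_sum infsum gM A) (QM A)"
    unfolding QM_def by (rule has_sum_SigmaI[where g = gM]) (use inM sgM sQM QM_def in auto)
  have hM: "(W has_sum infsum gM A) (gmp ` QM A)"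
    using hQM has_sum_reindex[OF inj_gmp, of W] by (simp add: o_def)
  have bM: "infsum gM A \<le> K1 * infsum W A"
    using infsum_mono[OF sgM summable_on_cmult_right[OF sA[folded A_def W_def]] gMle]
    by (simp add: infsum_cmult_right')
  define gE where "gE cs = X * W cs * (1 / (1 - Y*2) * (Y*2 / (1 - Y*2)))" for cs
  have inE: "((\<lambda>p. W (gep (cs, p))) has_sum gE cs) (UNIV \<times> {1..})" if "cs \<in> A \<inter> LF" for cs
  proof -
    have "((\<lambda>(u,d). X * W cs * ((Y*2) ^ u * (Y*2) ^ d)) has_sum gE cs) (UNIV \<times> {1..})"
      unfolding gE_def using has_sum_cmult_right[OF I2[OF w1]] by (simp add: case_prod_unfold)
    then show ?thesis
      by (rule has_sum_cong[THEN iffD1, rotated])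
         (use that in \<open>auto simp: W_def gep_def wt_ge mult.commute mult.left_commute\<close>)
  qed
  have gEle: "gE cs = K2 * W cs" for cs by (simp add: gE_def K2_def mult.commute mult.left_commute)
  have sAF: "W summable_on (A \<inter> LF)" using sA[folded A_def W_def] summable_on_subset by blast
  have sgE: "gE summable_on (A \<inter> LF)" unfolding gEle using summable_on_cmult_right[OF sAF] by simp
  have gEn: "0 \<le> gE cs" for cs unfolding gEle using K Wn by simp
  have sQE: "(\<lambda>p. W (gep p)) summable_on QE A"
    unfolding QE_def by (rule summable_on_SigmaI[where g = gE]) (use inE sgE Wn in auto)
  have hQE: "((\<lambda>p. W (gep p)) has_sum infsum gE (A \<inter> LF)) (QE A)"
    unfolding QE_def by (rule has_sum_SigmaI[where g = gE]) (use inE sgE sQE QE_def in auto)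
  have hE: "(W has_sum infsum gE (A \<inter> LF)) (gep ` QE A)"
    using hQE has_sum_reindex[OF inj_gep, of W] by (simp add: o_def)
  have "infsum W (A \<inter> LF) \<le> infsum W A"
    by (rule infsum_mono_neutral[OF sAF sA[folded A_def W_def]]) (use Wn in auto)
  then have bE: "infsum gE (A \<inter> LF) \<le> K2 * infsum W A"
    unfolding gEle infsum_cmult_right'[of K2 W] using K by (simp add: mult_left_mono)
  have "(W has_sum (infsum gM A + infsum gE (A \<inter> LF))) (gmp ` QM A \<union> gep ` QE A)"
    by (rule has_sum_Un_disjoint[OF hM hE disj_gm_ge[OF AL AL]])
  then have H: "(W has_sum (infsum gM A + infsum gE (A \<inter> LF))) (Ln (Suc (Suc n)))"
    using decomp_len[of n] by (simp add: A_def Ln_def)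
  have "infsum gM A + infsum gE (A \<inter> LF) \<le> (K1 + K2) * infsum W A" using bM bE by (simp add: algebra_simps)
  also have "\<dots> \<le> (1/2) * (1/2)^n"
    using K bA[folded A_def W_def] infsum_nonneg[of A W] Wn
    by (intro mult_mono) auto
  finally show ?thesis using H by (auto simp: W_def infsumI intro: has_sum_imp_summable)
qed

lemma summ_Ln:
  fixes X Y :: real
  assumes XY: "0 \<le> X" "X \<le> 1/100" "0 \<le> Y" "Y \<le> 1/100"
  shows "wt X Y 2 summable_on Ln (Suc n) \<and> infsum (wt X Y 2) (Ln (Suc n)) \<le> (1/2)^n"
proof (induction n)
  case 0
  have w: "\<bar>Y*2\<bar> < 1" using XY by auto
  have "Ln (Suc 0) = L1" by (simp add: Ln_def L1_eq)
  moreover have "(wt X Y 2 has_sum (X*Y*(1/(1-Y*2)))) L1" by (rule sum_L1[OF w])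
  moreover have "X*Y*(1/(1-Y*2)) \<le> 1"
  proof -
    have "1/(1-Y*2) \<le> 2" using XY by (auto simp: field_simps)
    moreover have "X*Y \<le> 1/2" using XY mult_mono[of X 1 Y "1/2"] by auto
    ultimately show ?thesis using XY mult_mono[of "X*Y" "1/2" "1/(1-Y*2)" 2] by auto
  qed
  ultimately show ?case by (auto simp: infsumI intro: has_sum_imp_summable)
next
  case (Suc n)
  then show ?case using summ_step[OF XY] by blast
qed

lemma summ_LL:
  fixes X Y :: real
  assumes XY: "0 \<le> X" "X \<le> 1/100" "0 \<le> Y" "Y \<le> 1/100"
  shows "wt X Y 2 summable_on LL"
proof -
  have "wt X Y 2 summable_on (\<Union>n\<in>UNIV. Ln (Suc n))"
  proof (rule summable_on_UnionI[where g = "\<lambda>n. infsum (wt X Y 2) (Ln (Suc n))"])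
    show "(wt X Y 2 has_sum infsum (wt X Y 2) (Ln (Suc n))) (Ln (Suc n))" for n
      using summ_Ln[OF XY, of n] by auto
    have "(\<lambda>n. (1/2::real)^n) summable_on UNIV"
      using has_sum_geom[of "1/2"] has_sum_imp_summable by auto
    then show "(\<lambda>n. infsum (wt X Y 2) (Ln (Suc n))) summable_on UNIV"
      by (rule summable_on_comparison_test) (use summ_Ln[OF XY] XY in \<open>auto intro!: infsum_nonneg wt_nonneg\<close>)
    show "0 \<le> wt X Y 2 y" for y using XY by (simp add: wt_nonneg)
    show "disjoint_family_on (\<lambda>n. Ln (Suc n)) UNIV"
      by (auto simp: disjoint_family_on_def Ln_def)
  qed
  moreover have "(\<Union>n\<in>UNIV. Ln (Suc n)) = LL"
    using LL_len by (auto simp: Ln_def) (metis Suc_le_D)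
  ultimately show ?thesis by simp
qed

lemma summ_wt:
  fixes x y z :: real
  assumes "\<bar>x\<bar> \<le> 1/100" "\<bar>y\<bar> \<le> 1/100" "\<bar>z\<bar> \<le> 2"
  shows "wt x y z summable_on LL"
proof -
  have s: "wt \<bar>x\<bar> \<bar>y\<bar> 2 summable_on LL" using summ_LL assms by auto
  have "norm (wt x y z cs) \<le> wt \<bar>x\<bar> \<bar>y\<bar> 2 cs" for cs
  proof -
    have "\<bar>z\<bar> ^ cnn cs \<le> 2 ^ cnn cs" using assms by (intro power_mono) auto
    then show ?thesis
      by (auto simp: wt_def abs_mult power_abs intro!: mult_left_mono)
  qed
  then have "(\<lambda>cs. norm (wt x y z cs)) summable_on LL"
    by (rule Infinite_Sum.abs_summable_on_comparison_test'[OF s])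
  then show ?thesis using summable_on_iff_abs_summable_on_real by blast
qed



definition CC :: "real \<Rightarrow> real \<Rightarrow> real \<Rightarrow> real" where
  "CC x y z = infsum (wt x y z) LL"

definition FF :: "real \<Rightarrow> real \<Rightarrow> real \<Rightarrow> real" where
  "FF x y z = infsum (wt x y z) LF"

lemma geo_sum_mult: "(\<Sum>i\<le>c. (z::real) ^ i) * (1 - z) = 1 - z ^ Suc c"
  using one_diff_power_eq[of z "Suc c"] by (simp add: lessThan_Suc_atMost mult.commute)

lemma funeq:
  fixes x y z :: real
  assumes a: "\<bar>x\<bar> \<le> 1/100" "\<bar>y\<bar> \<le> 1/100" "\<bar>z\<bar> \<le> 2"
  shows "\<exists>SM. CC x y z = x*y*(1/(1-y*z)) + SM + x*(1/(1-y*z)*(y*z/(1-y*z))) * FF x y z \<and>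
              SM * ((1-z)*(1-y*z)) = x * (CC x y 1 - z * CC x y z)"
    and "FF x y z = x*y*(1/(1-y*z)) + x*(1/(1-y*z)) * FF x y z + x*(1/(1-y*z)*(y*z/(1-y*z))) * FF x y z"
proof -
  have s: "wt x y z summable_on LL" using summ_wt a by auto
  have s1: "wt x y 1 summable_on LL" using summ_wt a by auto
  have yz: "\<bar>y*z\<bar> < 1"
  proof -
    have "\<bar>y*z\<bar> = \<bar>y\<bar> * \<bar>z\<bar>" by (simp add: abs_mult)
    also have "\<dots> \<le> 1/100 * 2" using a by (intro mult_mono) auto
    finally show ?thesis by simp
  qed
  have yz1: "1 - y*z \<noteq> 0" using yz by auto
  have sF: "wt x y z summable_on LF" using s LF_LL summable_on_subset by blast
  have sL1: "(wt x y z has_sum (x*y*(1/(1-y*z)))) L1" by (rule sum_L1[OF yz])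
  define SM where "SM = infsum (wt x y z) (gmp ` QM LL)"
  define SE where "SE = infsum (wt x y z) (gep ` QE LL)"
  define SMF where "SMF = infsum (wt x y z) (gmp ` QMF LL)"
  have sM: "wt x y z summable_on (gmp ` QM LL)" using s gmp_QM[of LL] summable_on_subset by blast
  have sE: "wt x y z summable_on (gep ` QE LL)" using s gep_QE[of LL] LF_LL summable_on_subset by blast
  have sMF: "wt x y z summable_on (gmp ` QMF LL)" using sF decomp_F summable_on_subset
    by (metis (no_types, lifting) Un_upper1 mem_Collect_eq subsetI subset_iff)
  define K where "K = 1/(1-y*z)*(y*z/(1-y*z))"
  have hE: "((\<lambda>cs. x * wt x y z cs * K) has_sum SE) (LL \<inter> LF)"
    unfolding SE_def QE_def gep_def
  proof (rule sigma_sum)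
    show "inj_on (\<lambda>(cs, u, d). ge cs u d) (Sigma (LL \<inter> LF) (\<lambda>_. UNIV \<times> {1..}))"
      using inj_gep[of LL] by (simp add: gep_def QE_def)
    show "wt x y z summable_on (\<lambda>(cs, u, d). ge cs u d) ` ((LL \<inter> LF) \<times> UNIV \<times> {1..})"
      using sE by (simp add: gep_def QE_def)
    fix cs assume cs: "cs \<in> LL \<inter> LF"
    have "((\<lambda>(u,d). x * wt x y z cs * ((y*z) ^ u * (y*z) ^ d)) has_sum (x * wt x y z cs * K)) (UNIV \<times> {1..})"
      unfolding K_def using has_sum_cmult_right[OF I2[OF yz]] by (simp add: case_prod_unfold)
    then show "((\<lambda>b. wt x y z (case (cs, b) of (cs, u, d) \<Rightarrow> ge cs u d)) has_sum x * wt x y z cs * K) (UNIV \<times> {1..})"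
      by (rule has_sum_cong[THEN iffD1, rotated])
         (use cs in \<open>auto simp: wt_ge mult.commute mult.left_commute\<close>)
  qed
  have LLF: "LL \<inter> LF = LF" using LF_LL by auto
  have SE: "SE = x * K * FF x y z"
  proof -
    have "((\<lambda>cs. x * K * wt x y z cs) has_sum (x * K * FF x y z)) LF"
      unfolding FF_def by (rule has_sum_cmult_right[OF has_sum_infsum[OF sF]])
    moreover have "(\<lambda>cs. x * wt x y z cs * K) = (\<lambda>cs. x * K * wt x y z cs)" by (auto simp: fun_eq_iff)
    ultimately show ?thesis using hE LLF has_sum_unique by metis
  qed
  have hMF: "((\<lambda>cs. x * wt x y z cs * (1/(1-y*z))) has_sum SMF) (LL \<inter> LF)"
    unfolding SMF_def QMF_def gmp_def
  proof (rule sigma_sum)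
    show "inj_on (\<lambda>(cs, i, u). gm cs i u) (Sigma (LL \<inter> LF) (\<lambda>cs. {cnn cs} \<times> UNIV))"
      using inj_gmp by (simp add: gmp_def)
    show "wt x y z summable_on (\<lambda>(cs, i, u). gm cs i u) ` (SIGMA cs:LL \<inter> LF. {cnn cs} \<times> UNIV)"
      using sMF by (simp add: gmp_def QMF_def)
    fix cs assume cs: "cs \<in> LL \<inter> LF"
    have e: "x * (x ^ length cs * y ^ (topT cs + 1)) * (z ^ cnn cs * (1/(1-y*z))) = x * wt x y z cs * (1/(1-y*z))"
      by (simp add: wt_def)
    have h: "((\<lambda>(i,u). c * (z ^ i * (y*z) ^ u)) has_sum (c * (z ^ cnn cs * (1/(1-y*z))))) ({cnn cs} \<times> UNIV)" for c
      using has_sum_cmult_right[OF I3[OF yz]] by (simp add: case_prod_unfold)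
    have "((\<lambda>(i,u). x * (x ^ length cs * y ^ (topT cs + 1)) * (z ^ i * (y*z) ^ u)) has_sum
          (x * (x ^ length cs * y ^ (topT cs + 1)) * (z ^ cnn cs * (1/(1-y*z))))) ({cnn cs} \<times> UNIV)"
      by (rule h)
    then have "((\<lambda>(i,u). x * (x ^ length cs * y ^ (topT cs + 1)) * (z ^ i * (y*z) ^ u)) has_sum
          (x * wt x y z cs * (1/(1-y*z)))) ({cnn cs} \<times> UNIV)"
      by (simp only: e)
    then show "((\<lambda>b. wt x y z (case (cs, b) of (cs, i, u) \<Rightarrow> gm cs i u)) has_sum x * wt x y z cs * (1/(1-y*z))) ({cnn cs} \<times> UNIV)"
      by (rule has_sum_cong[THEN iffD1, rotated])
         (use cs in \<open>auto simp: wt_gm mult.commute mult.left_commute\<close>)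
  qed
  have SMF: "SMF = x * (1/(1-y*z)) * FF x y z"
  proof -
    have "((\<lambda>cs. x * (1/(1-y*z)) * wt x y z cs) has_sum (x * (1/(1-y*z)) * FF x y z)) LF"
      unfolding FF_def by (rule has_sum_cmult_right[OF has_sum_infsum[OF sF]])
    moreover have "(\<lambda>cs. x * wt x y z cs * (1/(1-y*z))) = (\<lambda>cs. x * (1/(1-y*z)) * wt x y z cs)" by (auto simp: fun_eq_iff)
    ultimately show ?thesis using hMF LLF has_sum_unique by metis
  qed
  define gz where "gz cs = x * (x ^ length cs * y ^ (topT cs + 1)) * ((\<Sum>i\<le>cnn cs. z ^ i) * (1 / (1 - y*z)))" for cs
  have hM: "(gz has_sum SM) LL"
    unfolding SM_def QM_def gmp_def
  proof (rule sigma_sum)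
    show "inj_on (\<lambda>(cs, i, u). gm cs i u) (Sigma LL (\<lambda>cs. {..cnn cs} \<times> UNIV))"
      using inj_gmp by (simp add: gmp_def)
    show "wt x y z summable_on (\<lambda>(cs, i, u). gm cs i u) ` (SIGMA cs:LL. {..cnn cs} \<times> UNIV)"
      using sM by (simp add: gmp_def QM_def)
    fix cs assume cs: "cs \<in> LL"
    have "((\<lambda>(i,u). x * (x ^ length cs * y ^ (topT cs + 1)) * (z ^ i * (y*z) ^ u)) has_sum gz cs) ({..cnn cs} \<times> UNIV)"
      unfolding gz_def using has_sum_cmult_right[OF I1[OF yz]] by (simp add: case_prod_unfold)
    then show "((\<lambda>b. wt x y z (case (cs, b) of (cs, i, u) \<Rightarrow> gm cs i u)) has_sum gz cs) ({..cnn cs} \<times> UNIV)"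
      by (rule has_sum_cong[THEN iffD1, rotated])
         (use cs in \<open>auto simp: wt_gm mult.commute mult.left_commute\<close>)
  qed
  have SMeq: "SM * ((1-z)*(1-y*z)) = x * (CC x y 1 - z * CC x y z)"
  proof -
    have h1: "((\<lambda>cs. gz cs * ((1-z)*(1-y*z))) has_sum SM * ((1-z)*(1-y*z))) LL"
      using has_sum_cmult_left[OF hM] by simp
    have "gz cs * ((1-z)*(1-y*z)) = x * (wt x y 1 cs - z * wt x y z cs)" for cs
    proof -
      have "gz cs * ((1-z)*(1-y*z)) = x * (x ^ length cs * y ^ (topT cs + 1)) * ((\<Sum>i\<le>cnn cs. z ^ i) * (1 - z)) * ((1-y*z) / (1 - y*z))"
        by (simp add: gz_def field_simps)
      also have "\<dots> = x * (x ^ length cs * y ^ (topT cs + 1)) * (1 - z ^ Suc (cnn cs))"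
        using yz1 by (simp add: geo_sum_mult)
      also have "\<dots> = x * (wt x y 1 cs - z * wt x y z cs)" by (simp add: wt_def algebra_simps)
      finally show ?thesis .
    qed
    then have h1': "((\<lambda>cs. x * (wt x y 1 cs - z * wt x y z cs)) has_sum SM * ((1-z)*(1-y*z))) LL"
      using h1 by simp
    have "((\<lambda>cs. x * (wt x y 1 cs + (- z) * wt x y z cs)) has_sum x * (CC x y 1 + (- z) * CC x y z)) LL"
      unfolding CC_def
      by (intro has_sum_cmult_right has_sum_add has_sum_infsum s s1 summable_on_cmult_right)
    then show ?thesis using h1' has_sum_unique by force
  qed
  have dLL: "LL = L1 \<union> (gmp ` QM LL \<union> gep ` QE LL)"
  proof -
    have "LL = {cs\<in>LL. length cs = 1} \<union> {cs\<in>LL. 2 \<le> length cs}"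
    proof -
      { fix cs assume "cs \<in> LL" then have "length cs = 1 \<or> 2 \<le> length cs" using LL_len[of cs] by linarith }
      then show ?thesis by blast
    qed
    then show ?thesis using L1_eq decomp_all by simp
  qed
  have d1: "L1 \<inter> (gmp ` QM LL \<union> gep ` QE LL) = {}"
    unfolding L1_eq decomp_all[symmetric] by auto
  have "(wt x y z has_sum (x*y*(1/(1-y*z)) + (SM + SE))) LL"
    apply (subst dLL)
    apply (rule has_sum_Un_disjoint[OF sL1 _ d1])
    apply (rule has_sum_Un_disjoint[OF _ _ disj_gm_ge])
    using sM sE by (auto simp: SM_def SE_def)
  then have "CC x y z = x*y*(1/(1-y*z)) + SM + SE" unfolding CC_def using infsumI by force
  then show "\<exists>SM. CC x y z = x*y*(1/(1-y*z)) + SM + x*(1/(1-y*z)*(y*z/(1-y*z))) * FF x y z \<and>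
              SM * ((1-z)*(1-y*z)) = x * (CC x y 1 - z * CC x y z)"
    using SMeq SE K_def by auto
  have dLF: "LF = L1 \<union> (gmp ` QMF LL \<union> gep ` QE LL)"
  proof -
    have "LF = {cs\<in>LF. length cs = 1} \<union> {cs\<in>LF. 2 \<le> length cs}"
    proof -
      { fix cs assume "cs \<in> LF" then have "length cs = 1 \<or> 2 \<le> length cs" using LL_len[of cs] LF_LL by force }
      then show ?thesis by blast
    qed
    moreover have "{cs\<in>LF. length cs = 1} = L1" using L1_eq L1_LF LF_LL by blast
    ultimately show ?thesis using decomp_F by simp
  qed
  have d2: "L1 \<inter> (gmp ` QMF LL \<union> gep ` QE LL) = {}"
    unfolding decomp_F[symmetric] L1_eq by auto
  have "(wt x y z has_sum (x*y*(1/(1-y*z)) + (SMF + SE))) LF"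
    apply (subst dLF)
    apply (rule has_sum_Un_disjoint[OF sL1 _ d2])
    apply (rule has_sum_Un_disjoint[OF _ _ disj_gmF_ge])
    using sMF sE by (auto simp: SMF_def SE_def)
  then have "FF x y z = x*y*(1/(1-y*z)) + SMF + SE" unfolding FF_def using infsumI by force
  then show "FF x y z = x*y*(1/(1-y*z)) + x*(1/(1-y*z)) * FF x y z + x*(1/(1-y*z)*(y*z/(1-y*z))) * FF x y z"
    using SMF SE K_def by auto
qed



lemma small_prod: fixes y w :: real assumes "\<bar>y\<bar> \<le> 1/100" "\<bar>w\<bar> \<le> 2" shows "\<bar>y*w\<bar> \<le> 1/50"
proof -
  have "\<bar>y*w\<bar> = \<bar>y\<bar> * \<bar>w\<bar>" by (simp add: abs_mult)
  also have "\<dots> \<le> 1/100 * 2" using assms by (intro mult_mono) auto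
  finally show ?thesis by simp
qed

lemma key:
  fixes x y w :: real
  assumes a: "\<bar>x\<bar> \<le> 1/100" "\<bar>y\<bar> \<le> 1/100" "\<bar>w\<bar> \<le> 2"
  shows "CC x y w * ((1-w)*(1-y*w) + x*w) = x*y*(1-w) + x*CC x y 1 + x^2*y^2*w*(1-w)/((1-y*w)^2-x)"
proof -
  obtain SM where C: "CC x y w = x*y*(1/(1-y*w)) + SM + x*(1/(1-y*w)*(y*w/(1-y*w))) * FF x y w"
    and S: "SM * ((1-w)*(1-y*w)) = x * (CC x y 1 - w * CC x y w)"
    using funeq(1)[OF a] by blast
  have Fe: "FF x y w = x*y*(1/(1-y*w)) + x*(1/(1-y*w)) * FF x y w + x*(1/(1-y*w)*(y*w/(1-y*w))) * FF x y w"
    using funeq(2)[OF a] .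
  define A where "A = 1 - y*w"
  define F where "F = FF x y w"
  define C0 where "C0 = CC x y w"
  define C1 where "C1 = CC x y 1"
  have yw: "\<bar>y*w\<bar> \<le> 1/50" using small_prod a by auto
  have A0: "A \<noteq> 0" and Apos: "A \<ge> 49/50" using yw by (auto simp: A_def)
  have "A^2 \<ge> (49/50)^2" using Apos by (intro power_mono) auto
  then have q: "A^2 - x > 0" using a by (simp add: power2_eq_square abs_le_iff)
  have Fe': "F = x*y/A + x*F/A + x*y*w*F/(A*A)" using Fe unfolding F_def A_def by (simp add: field_simps)
  have "A * (F * (A*A)) = A * (x*y*A + x*F*A + x*y*w*F)" using Fe' A0 by (simp add: field_simps)
  then have "F * (A*A) = x*y*A + x*F*A + x*y*w*F" using A0 by simp
  then have e1: "F * (A*A - x*A - x*y*w) = x*y*A" by (simp add: algebra_simps)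
  have e2: "A*A - x*A - x*y*w = A^2 - x" by (simp add: A_def algebra_simps power2_eq_square)
  have "F * (A^2 - x) = x*y*A" using e1 e2 by simp
  then have Fq: "F = x*y*A/(A^2 - x)" using q by (simp add: eq_divide_eq)
  have C': "C0 = x*y/A + SM + x*y*w*F/(A*A)" using C unfolding F_def A_def C0_def by (simp add: field_simps)
  have S': "SM * ((1-w)*A) = x * (C1 - w * C0)" using S unfolding A_def C0_def C1_def .
  have t1: "x*y/A * ((1-w)*A) = x*y*(1-w)" using A0 by simp
  have t2: "x*y*w*F/(A*A) * ((1-w)*A) = x*y*w*F*(1-w)/A" using A0 by (simp add: field_simps)
  have "C0 * ((1-w)*A) = (x*y/A + SM + x*y*w*F/(A*A)) * ((1-w)*A)" using C' by simp
  also have "\<dots> = x*y/A * ((1-w)*A) + SM * ((1-w)*A) + x*y*w*F/(A*A) * ((1-w)*A)"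
    by (simp only: distrib_right)
  also have "\<dots> = x*y*(1-w) + SM * ((1-w)*A) + x*y*w*F*(1-w)/A" using t1 t2 by simp
  finally have "C0 * ((1-w)*A) = x*y*(1-w) + SM * ((1-w)*A) + x*y*w*F*(1-w)/A" .
  also have "\<dots> = x*y*(1-w) + x * (C1 - w * C0) + x*y*w*(1-w)*F/A" using S' by simp
  also have "x*y*w*(1-w)*F/A = x^2*y^2*w*(1-w)/(A^2-x)"
  proof -
    have Qn: "A^2 - x \<noteq> 0" using q by simp
    have "x*y*w*(1-w)*F/A = (x*y*w*(1-w)*(x*y)) / (A^2-x)" unfolding Fq using A0 Qn by (simp add: field_simps)
    also have "x*y*w*(1-w)*(x*y) = x^2*y^2*w*(1-w)" by (simp add: power2_eq_square algebra_simps)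
    finally show ?thesis .
  qed
  finally have "C0 * ((1-w)*A) = x*y*(1-w) + x * (C1 - w * C0) + x^2*y^2*w*(1-w)/(A^2-x)" .
  then have "C0 * ((1-w)*A + x*w) = x*y*(1-w) + x*C1 + x^2*y^2*w*(1-w)/(A^2-x)"
    by (simp add: algebra_simps)
  then show ?thesis by (simp add: A_def C0_def C1_def)
qed

lemma z0_facts:
  fixes x y :: real
  assumes a: "\<bar>x\<bar> \<le> 1/100" "\<bar>y\<bar> \<le> 1/100" "y \<noteq> 0"
  shows "\<bar>z0 x y\<bar> \<le> 2" "(1 - z0 x y)*(1 - y*z0 x y) + x * z0 x y = 0"
proof -
  define b where "b = 1 + y - x"
  define D where "D = b^2 - 4*y"
  define s where "s = sqrt D"
  have b: "b \<ge> 49/50" using a by (auto simp: b_def)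
  have "b^2 \<ge> (49/50)^2" using b by (intro power_mono) auto
  then have D: "D \<ge> (9/10)^2" using a by (simp add: D_def power2_eq_square abs_le_iff)
  then have s: "s \<ge> 9/10" using real_le_rsqrt[OF D] unfolding s_def by simp
  have D0: "0 \<le> D" using D by (smt (verit) zero_le_power2)
  have s2: "s^2 = D" using D0 by (simp add: s_def)
  have z: "z0 x y = (b - s)/(2*y)" by (simp add: z0_def b_def D_def s_def)
  have "(b - s) * (b + s) = 4*y" using s2 by (simp add: D_def algebra_simps power2_eq_square)
  moreover have "2*y*z0 x y = b - s" using z a(3) by simp
  ultimately have "2*y*(z0 x y * (b + s)) = 2*y*2"
  proof -
    assume h1: "(b - s) * (b + s) = 4*y" and h2: "2*y*z0 x y = b - s"
    have "2*y*(z0 x y * (b + s)) = (2*y*z0 x y) * (b + s)" by (simp only: mult.assoc)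
    also have "\<dots> = 4*y" using h1 h2 by simp
    finally show ?thesis by simp
  qed
  then have zz: "z0 x y * (b + s) = 2" using a(3) by simp
  have bs: "b + s \<ge> 1" using b s by auto
  then have zp: "z0 x y = 2 / (b + s)" using zz by (simp add: eq_divide_eq)
  have "2/(b+s) \<le> 2" "0 \<le> 2/(b+s)" using bs by (auto simp: divide_le_eq)
  then show "\<bar>z0 x y\<bar> \<le> 2" using zp by simp
  have ss: "s = b - 2*y*z0 x y" using z a(3) by simp
  have "(b - 2*y*z0 x y)^2 + 4*y = b^2" using s2 ss by (simp add: D_def)
  then have "4*y*(y * (z0 x y)^2 - b * z0 x y + 1) = 0" by (simp add: algebra_simps power2_eq_square)
  then have "y * (z0 x y)^2 - b * z0 x y + 1 = 0" using a(3) by simp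
  then show "(1 - z0 x y)*(1 - y*z0 x y) + x * z0 x y = 0"
    by (simp add: b_def algebra_simps power2_eq_square)
qed

lemma alg_final:
  fixes p z0 z xc r0 rz C K :: real
  assumes "0 = p*(1-z0) + xc + r0" "C*K = p*(1-z) + xc + rz" "K \<noteq> 0"
  shows "C = (p*(z0 - z) + rz - r0)/K"
proof -
  have "C*K = p*(z0 - z) + rz - r0" using assms(1,2) by (simp add: algebra_simps)
  then show ?thesis using assms(3) by (simp add: eq_divide_eq)
qed

lemma CC_formula:
  fixes x y z :: real
  assumes a: "\<bar>x\<bar> \<le> 1/100" "\<bar>y\<bar> \<le> 1/100" "y \<noteq> 0" "\<bar>z\<bar> \<le> 1/100"
  shows "CC x y z = (x*y*(z0 x y - z) + x^2*y^2*z*(1-z) / ((1-y*z)^2 - x)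
          - x^2*y^2*z0 x y*(1 - z0 x y) / ((1 - y*z0 x y)^2 - x))
        / ((1-z)*(1-y*z) + x*z)"
proof -
  have k0: "CC x y (z0 x y) * 0 = x*y*(1-z0 x y) + x*CC x y 1 + x^2*y^2*z0 x y*(1-z0 x y)/((1-y*z0 x y)^2-x)"
    using key[OF a(1,2) z0_facts(1)[OF a(1-3)]] z0_facts(2)[OF a(1-3)] by simp
  have kz: "CC x y z * ((1-z)*(1-y*z) + x*z) = x*y*(1-z) + x*CC x y 1 + x^2*y^2*z*(1-z)/((1-y*z)^2-x)"
    using key[OF a(1,2)] a(4) by auto
  have K: "(1-z)*(1-y*z) + x*z \<noteq> 0"
  proof -
    have "\<bar>y*z\<bar> \<le> 1/50" using small_prod a by auto
    moreover have "\<bar>x*z\<bar> \<le> 1/50" using small_prod[of x z] a by auto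
    moreover have "(1-z)*(1-y*z) \<ge> (99/100)*(49/50)"
      using calculation a by (intro mult_mono) auto
    ultimately show ?thesis by auto
  qed
  show ?thesis by (rule alg_final[OF k0[simplified, symmetric] kz K])
qed



definition cells :: "(int \<times> int) list \<Rightarrow> (int \<times> int) set" where
  "cells cs = (\<Union>j<length cs. {int j} \<times> {fst (cs!j)..snd (cs!j)})"

lemma mem_cells: "(a, y) \<in> cells cs \<longleftrightarrow> 0 \<le> a \<and> a < int (length cs) \<and> fst (cs ! nat a) \<le> y \<and> y \<le> snd (cs ! nat a)"
proof
  assume "(a, y) \<in> cells cs"
  then obtain j where j: "j < length cs" "a = int j" "fst (cs!j) \<le> y" "y \<le> snd (cs!j)"
    unfolding cells_def by auto
  then have "nat a = j" by simp
  then show "0 \<le> a \<and> a < int (length cs) \<and> fst (cs ! nat a) \<le> y \<and> y \<le> snd (cs ! nat a)" using j by simp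
next
  assume a: "0 \<le> a \<and> a < int (length cs) \<and> fst (cs ! nat a) \<le> y \<and> y \<le> snd (cs ! nat a)"
  then have "nat a < length cs" "a = int (nat a)" by auto
  then show "(a, y) \<in> cells cs" using a unfolding cells_def
    by (intro UN_I[of "nat a"]) auto
qed


lemma G1: "good cs \<Longrightarrow> j < length cs \<Longrightarrow> fst (cs!j) \<le> snd (cs!j)"
  using good_props[of cs] nth_mem[of j cs] by auto


lemma G2: "good cs \<Longrightarrow> j \<le> k \<Longrightarrow> k < length cs \<Longrightarrow> snd (cs!k) \<le> snd (cs!j)"
proof (induction cs arbitrary: j k rule: good.induct)
  case 1 then show ?case by simp
next
  case (2 p) then show ?case by simp
next
  case (3 p q r)
  have g: "good (q # r)" using "3.prems"(1) by simp
  show ?case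
  proof (cases j)
    case 0
    have "(p # q # r) ! k \<in> set (p # q # r)" using "3.prems"(3) by (rule nth_mem)
    then have "snd ((p # q # r) ! k) \<le> snd (hd (p # q # r))" using good_props[OF "3.prems"(1)] by blast
    then show ?thesis using 0 by simp
  next
    case (Suc j')
    then obtain k' where k: "k = Suc k'" using "3.prems"(2) by (cases k) auto
    have "snd ((q # r) ! k') \<le> snd ((q # r) ! j')"
      using "3.IH"[OF g, of j' k'] "3.prems"(2,3) Suc k by simp
    then show ?thesis using Suc k by simp
  qed
qed

lemma G3: "good cs \<Longrightarrow> Suc j < length cs \<Longrightarrow> fst (cs!j) \<le> snd (cs!Suc j)"
proof (induction cs arbitrary: j rule: good.induct)
  case 1 then show ?case by simp
next
  case (2 p) then show ?case by simp
next
  case (3 p q r)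
  have g: "good (q # r)" using "3.prems"(1) by simp
  show ?case
  proof (cases j)
    case 0 then show ?thesis using "3.prems"(1) by simp
  next
    case (Suc j')
    have "fst ((q # r) ! j') \<le> snd ((q # r) ! Suc j')"
      using "3.IH"[OF g, of j'] "3.prems"(2) Suc by simp
    then show ?thesis using Suc by simp
  qed
qed

lemma G4: "good cs \<Longrightarrow> j < k \<Longrightarrow> k < l \<Longrightarrow> l < length cs \<Longrightarrow> fst (cs!j) \<le> y \<Longrightarrow> fst (cs!l) \<le> y \<Longrightarrow> y \<le> snd (cs!l) \<Longrightarrow> fst (cs!k) \<le> y"
proof (induction cs arbitrary: j k l rule: good.induct)
  case 1 then show ?case by simp
next
  case (2 p) then show ?case by simp
next
  case (3 p q r)
  have g: "good (q # r)" using "3.prems"(1) by simp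
  have disj: "fst q \<le> fst p \<or> (\<forall>s\<in>set (q # r). fst q \<le> fst s)" using "3.prems"(1) by simp
  obtain k' where k: "k = Suc k'" using "3.prems"(2) by (cases k) auto
  obtain l' where l: "l = Suc l'" using "3.prems"(2,3) by (cases l) auto
  have l': "l' < length (q # r)" "fst ((q # r) ! l') \<le> y" "y \<le> snd ((q # r) ! l')" "k' < l'"
    using "3.prems"(3,4,6,7) k l by auto
  show ?case
  proof (cases j)
    case 0
    have fp: "fst p \<le> y" using "3.prems"(5) 0 by simp
    have fq: "fst q \<le> y"
      using disj
    proof
      assume "fst q \<le> fst p" then show ?thesis using fp by simp
    next
      assume a: "\<forall>s\<in>set (q # r). fst q \<le> fst s"
      have "(q # r) ! l' \<in> set (q # r)" using l'(1) by (rule nth_mem)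
      then have "fst q \<le> fst ((q # r) ! l')" using a by blast
      then show ?thesis using l'(2) by simp
    qed
    show ?thesis
    proof (cases k')
      case 0 then show ?thesis using fq k by simp
    next
      case (Suc k'')
      have "fst ((q # r) ! k') \<le> y"
        using "3.IH"[OF g, of 0 k' l'] fq l' Suc by simp
      then show ?thesis using k by simp
    qed
  next
    case (Suc j')
    have "fst ((q # r) ! k') \<le> y"
      using "3.IH"[OF g, of j' k' l'] "3.prems"(2,5) l' Suc k by simp
    then show ?thesis using k by simp
  qed
qed

lemma cells_Cons: "cells (p # r) = {0} \<times> {fst p..snd p} \<union> (\<lambda>(a,y). (a+1,y)) ` cells r"
proof (rule set_eqI)
  fix c :: "int \<times> int"
  obtain a y where c: "c = (a, y)" by (cases c)
  show "c \<in> cells (p # r) \<longleftrightarrow> c \<in> {0} \<times> {fst p..snd p} \<union> (\<lambda>(a,y). (a+1,y)) ` cells r"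
  proof
    assume "c \<in> cells (p # r)"
    then have m: "0 \<le> a" "a < int (length (p # r))" "fst ((p # r) ! nat a) \<le> y" "y \<le> snd ((p # r) ! nat a)"
      using c mem_cells by auto
    show "c \<in> {0} \<times> {fst p..snd p} \<union> (\<lambda>(a,y). (a+1,y)) ` cells r"
    proof (cases "a = 0")
      case True then show ?thesis using m c by auto
    next
      case False
      then have "(a - 1, y) \<in> cells r" using m
        by (auto simp: mem_cells nth_Cons' nat_diff_distrib)
      then show ?thesis using c by (auto simp: image_iff intro!: bexI[of _ "(a-1,y)"])
    qed
  next
    assume "c \<in> {0} \<times> {fst p..snd p} \<union> (\<lambda>(a,y). (a+1,y)) ` cells r"
    then show "c \<in> cells (p # r)"
    proof
      assume "c \<in> {0} \<times> {fst p..snd p}" then show ?thesis by (auto simp: mem_cells)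
    next
      assume "c \<in> (\<lambda>(a,y). (a+1,y)) ` cells r"
      then obtain a' y' where "(a', y') \<in> cells r" "c = (a'+1, y')" by auto
      then show ?thesis by (auto simp: mem_cells nat_add_distrib)
    qed
  qed
qed


lemma cols_cells: "good cs \<Longrightarrow> fst ` cells cs = {0..<int (length cs)}"
proof (rule set_eqI, rule iffI)
  fix a assume "good cs" "a \<in> {0..<int (length cs)}"
  then have "(a, fst (cs ! nat a)) \<in> cells cs" using G1[of cs "nat a"] by (auto simp: mem_cells)
  then show "a \<in> fst ` cells cs" by force
qed (auto simp: mem_cells)

lemma col_cells: "good cs \<Longrightarrow> j < length cs \<Longrightarrow> {y. (int j, y) \<in> cells cs} = {fst (cs!j)..snd (cs!j)}"
  by (auto simp: mem_cells)

lemma rows_cells: "good cs \<Longrightarrow> snd ` cells cs = {Min (fst ` set cs)..snd (hd cs)}"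
proof (induction cs rule: good.induct)
  case (2 p)
  have "cells [p] = {0} \<times> {fst p..snd p}" using cells_Cons[of p "[]"] by (simp add: cells_def)
  then show ?case by auto
next
  case (3 p q r)
  have IH: "snd ` cells (q # r) = {Min (fst ` set (q # r))..snd q}" using 3 by auto
  have sh: "snd ` ((\<lambda>(a,y). (a+1,y)) ` cells (q # r)) = snd ` cells (q # r)" by force
  have c: "snd ` cells (p # q # r) = {fst p..snd p} \<union> {Min (fst ` set (q # r))..snd q}"
    unfolding cells_Cons[of p "q # r"] image_Un sh IH by auto
  have m: "Min (fst ` set (p # q # r)) = min (fst p) (Min (fst ` set (q # r)))"
    by (simp add: Min_insert)
  have "Min (fst ` set (q # r)) \<le> fst q" by simp
  moreover have "fst q \<le> snd q" "fst p \<le> snd q" "snd q \<le> snd p" using "3.prems" G1[of "q#r" 0] by auto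
  ultimately show ?case unfolding c m by auto
qed auto



definition adjR :: "(int \<times> int) set \<Rightarrow> (int \<times> int) \<Rightarrow> (int \<times> int) \<Rightarrow> bool" where
  "adjR P a b \<longleftrightarrow> a \<in> P \<and> b \<in> P \<and> edge_adj a b"

definition conn :: "(int \<times> int) set \<Rightarrow> bool" where
  "conn P \<longleftrightarrow> (\<forall>p\<in>P. \<forall>q\<in>P. (adjR P)\<^sup>*\<^sup>* p q)"

lemma polyomino_iff: "polyomino P \<longleftrightarrow> finite P \<and> P \<noteq> {} \<and> conn P"
proof -
  have "(\<lambda>a b. a \<in> P \<and> b \<in> P \<and> edge_adj a b) = adjR P" by (auto simp: adjR_def fun_eq_iff)
  then show ?thesis by (simp add: polyomino_def conn_def)
qed

lemma edge_adj_sym: "edge_adj a b = edge_adj b a"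
  by (auto simp: edge_adj_def abs_minus_commute)

lemma adjR_sym: "(adjR P)\<^sup>*\<^sup>* a b \<Longrightarrow> (adjR P)\<^sup>*\<^sup>* b a"
proof -
  assume "(adjR P)\<^sup>*\<^sup>* a b"
  moreover have "conversep (adjR P) = adjR P" by (auto simp: adjR_def fun_eq_iff edge_adj_sym)
  ultimately show ?thesis by (metis rtranclp_converseI)
qed

lemma adjR_mono: "P \<subseteq> Q \<Longrightarrow> (adjR P)\<^sup>*\<^sup>* a b \<Longrightarrow> (adjR Q)\<^sup>*\<^sup>* a b"
  by (rule rtranclp_mono[THEN predicate2D, rotated]) (auto simp: adjR_def)

lemma conn_union:
  assumes "conn A" "conn B" "a \<in> A" "b \<in> B" "edge_adj a b"
  shows "conn (A \<union> B)"
proof -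
  have A: "(adjR (A \<union> B))\<^sup>*\<^sup>* p q" if "p \<in> A" "q \<in> A" for p q
    using assms(1) that adjR_mono[of A "A \<union> B"] by (auto simp: conn_def)
  have B: "(adjR (A \<union> B))\<^sup>*\<^sup>* p q" if "p \<in> B" "q \<in> B" for p q
    using assms(2) that adjR_mono[of B "A \<union> B"] by (auto simp: conn_def)
  have ab: "(adjR (A \<union> B))\<^sup>*\<^sup>* a b" using assms(3-5) by (auto simp: adjR_def)
  have AB: "(adjR (A \<union> B))\<^sup>*\<^sup>* p q" if "p \<in> A" "q \<in> B" for p q
    using A[OF that(1) assms(3)] ab B[OF assms(4) that(2)] by (meson rtranclp_trans)
  show ?thesis unfolding conn_def
  proof (intro ballI)
    fix p q assume "p \<in> A \<union> B" "q \<in> A \<union> B"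
    then show "(adjR (A \<union> B))\<^sup>*\<^sup>* p q" using A B AB adjR_sym by blast
  qed
qed

lemma conn_image:
  assumes "conn S" "\<And>a b. edge_adj (f a) (f b) = edge_adj a b"
  shows "conn (f ` S)"
proof -
  have "(adjR (f ` S))\<^sup>*\<^sup>* (f p) (f q)" if "(adjR S)\<^sup>*\<^sup>* p q" for p q
    using that
  proof (induction rule: rtranclp_induct)
    case base then show ?case by simp
  next
    case (step y z)
    then have "adjR (f ` S) (f y) (f z)" using assms(2) by (auto simp: adjR_def)
    then show ?case using step.IH by (meson rtranclp.rtrancl_into_rtrancl)
  qed
  then show ?thesis using assms(1) by (auto simp: conn_def)
qed

lemma conn_col: "conn ({0} \<times> {b..t})"
proof -
  define C where "C = ({0::int} \<times> {b..t})"
  have up: "(adjR C)\<^sup>*\<^sup>* (0, y) (0, y + int n)" if "b \<le> y" "y + int n \<le> t" for y n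
    using that
  proof (induction n)
    case 0 then show ?case by simp
  next
    case (Suc n)
    then have "(adjR C)\<^sup>*\<^sup>* (0, y) (0, y + int n)" by simp
    moreover have "adjR C (0, y + int n) (0, y + int (Suc n))"
      using Suc.prems by (auto simp: adjR_def C_def edge_adj_def)
    ultimately show ?case by (meson rtranclp.rtrancl_into_rtrancl)
  qed
  have "(adjR C)\<^sup>*\<^sup>* p q" if pq: "p \<in> C" "q \<in> C" "snd p \<le> snd q" for p q
  proof -
    obtain y1 y2 where "p = (0, y1)" "q = (0, y2)" "b \<le> y1" "y2 \<le> t"
      using pq by (cases p, cases q) (auto simp: C_def)
    moreover have "y2 = y1 + int (nat (y2 - y1))" using pq calculation by auto
    ultimately show ?thesis using up[of y1 "nat (y2 - y1)"] by auto
  qed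
  then have "(adjR C)\<^sup>*\<^sup>* p q" if "p \<in> C" "q \<in> C" for p q
    using that adjR_sym by (metis linear)
  then show ?thesis by (auto simp: conn_def C_def)
qed

lemma cells_single: "cells [p] = {0} \<times> {fst p..snd p}"
  using cells_Cons[of p "[]"] by (simp add: cells_def)

lemma conn_cells: "good cs \<Longrightarrow> conn (cells cs)"
proof (induction cs rule: good.induct)
  case 1 then show ?case by simp
next
  case (2 p) then show ?case by (simp add: cells_single conn_col)
next
  case (3 p q r)
  have c1: "conn ((\<lambda>(a,y). (a+1,y)) ` cells (q # r))"
    by (rule conn_image) (use 3 in \<open>auto simp: edge_adj_def split: prod.splits\<close>)
  define y where "y = max (fst p) (fst q)"
  have g: "fst p \<le> snd q" "fst q \<le> snd q" "snd q \<le> snd p" "fst p \<le> snd p"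
    using "3.prems" G1[of "q # r" 0] by auto
  have "(0, y) \<in> cells (q # r)" using g by (auto simp: mem_cells y_def)
  then have "(1, y) \<in> (\<lambda>(a,y). (a+1,y)) ` cells (q # r)" by force
  moreover have "(0, y) \<in> {0} \<times> {fst p..snd p}" using g by (auto simp: y_def)
  ultimately show ?case unfolding cells_Cons[of p "q # r"]
    by (intro conn_union[OF conn_col c1]) (auto simp: edge_adj_def)
qed

lemma Max_Icc: "(a::int) \<le> b \<Longrightarrow> Max {a..b} = b"
  by (rule Max_eqI) auto

lemma Min_Icc: "(a::int) \<le> b \<Longrightarrow> Min {a..b} = a"
  by (rule Min_eqI) auto

lemma col_top_cells: "good cs \<Longrightarrow> k < length cs \<Longrightarrow> col_top (cells cs) (int k) = snd (cs!k)"
  unfolding col_top_def using col_cells[of cs k] G1[of cs k] by (simp add: Max_Icc)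

lemma row_convex_cells:
  assumes g: "good cs" and m: "(x1, b) \<in> cells cs" "(x2, b) \<in> cells cs" "x1 \<le> x" "x \<le> x2"
  shows "(x, b) \<in> cells cs"
proof (cases "x = x1 \<or> x = x2")
  case True then show ?thesis using m by auto
next
  case False
  then have lt: "x1 < x" "x < x2" using m by auto
  have r: "0 \<le> x1" "x2 < int (length cs)" "fst (cs ! nat x1) \<le> b" "fst (cs ! nat x2) \<le> b" "b \<le> snd (cs ! nat x2)"
    using m by (auto simp: mem_cells)
  have "fst (cs ! nat x) \<le> b"
    using G4[OF g, of "nat x1" "nat x" "nat x2" b] r lt by auto
  moreover have "snd (cs ! nat x2) \<le> snd (cs ! nat x)"
    using G2[OF g, of "nat x" "nat x2"] r lt by auto
  ultimately show ?thesis using r lt by (auto simp: mem_cells)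
qed

lemma LL_props: "cs \<in> LL \<Longrightarrow> good cs \<and> (\<forall>p\<in>set cs. 0 \<le> fst p) \<and> (\<exists>p\<in>set cs. fst p = 0)"
  by (simp add: LL_def)


lemma cells_CPu: assumes cs: "cs \<in> LL" shows "cells cs \<in> CPu"
proof -
  have g: "good cs" and nn: "\<forall>p\<in>set cs. 0 \<le> fst p" and ex: "\<exists>p\<in>set cs. fst p = 0"
    using LL_props[OF cs] by auto
  have len: "0 < length cs" using g by (cases cs) auto
  have fin: "finite (cells cs)" by (simp add: cells_def)
  have ne: "(0, fst (cs!0)) \<in> cells cs" using G1[OF g len] len by (simp add: mem_cells)
  have pol: "polyomino (cells cs)" unfolding polyomino_iff using fin ne conn_cells[OF g] by auto
  have colc: "\<forall>a y1 y2 y. (a, y1) \<in> cells cs \<and> (a, y2) \<in> cells cs \<and> y1 \<le> y \<and> y \<le> y2 \<longrightarrow> (a, y) \<in> cells cs"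
    by (auto simp: mem_cells)
  have rowc: "\<forall>b x1 x2 x. (x1, b) \<in> cells cs \<and> (x2, b) \<in> cells cs \<and> x1 \<le> x \<and> x \<le> x2 \<longrightarrow> (x, b) \<in> cells cs"
  proof (intro allI impI)
    fix b x1 x2 x assume "(x1, b) \<in> cells cs \<and> (x2, b) \<in> cells cs \<and> x1 \<le> x \<and> x \<le> x2"
    then show "(x, b) \<in> cells cs" using row_convex_cells[OF g] by (elim conjE) 
  qed
  have norm1: "\<forall>(a,b)\<in>cells cs. 0 \<le> a \<and> 0 \<le> b"
  proof (clarify)
    fix a b assume "(a, b) \<in> cells cs"
    then have "0 \<le> a" "a < int (length cs)" "fst (cs ! nat a) \<le> b" by (auto simp: mem_cells)
    moreover have "0 \<le> fst (cs ! nat a)" using nn calculation nth_mem[of "nat a" cs] by auto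
    ultimately show "0 \<le> a \<and> 0 \<le> b" by auto
  qed
  obtain k where k: "k < length cs" "fst (cs!k) = 0" using ex by (metis in_set_conv_nth)
  have "(int k, 0) \<in> cells cs" using k G1[OF g k(1)] by (simp add: mem_cells)
  then have norm: "normalized (cells cs)" unfolding normalized_def
    using norm1 ne by (intro conjI exI)
  have tops: "\<forall>j\<in>columns (cells cs). \<forall>s\<in>columns (cells cs). j < s \<longrightarrow> col_top (cells cs) s \<le> col_top (cells cs) j"
  proof (intro ballI impI)
    fix j s assume js: "j \<in> columns (cells cs)" "s \<in> columns (cells cs)" "j < s"
    then have r: "0 \<le> j" "s < int (length cs)" unfolding columns_def cols_cells[OF g] by auto
    have "col_top (cells cs) (int (nat s)) \<le> col_top (cells cs) (int (nat j))"
      using col_top_cells[OF g, of "nat s"] col_top_cells[OF g, of "nat j"] G2[OF g, of "nat j" "nat s"] r js(3) by auto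
    then show "col_top (cells cs) s \<le> col_top (cells cs) j" using r js(3) by simp
  qed
  show ?thesis unfolding CPu_def convex_poly_def mem_Collect_eq by (intro conjI pol colc rowc norm tops)
qed

lemma stats_cells:
  assumes cs: "cs \<in> LL"
  shows "v_stat (cells cs) = length cs" "h_stat (cells cs) = topT cs + 1" "c_stat (cells cs) = cnn cs"
proof -
  have g: "good cs" and nn: "\<forall>p\<in>set cs. 0 \<le> fst p" and ex: "\<exists>p\<in>set cs. fst p = 0"
    using LL_props[OF cs] by auto
  have len: "0 < length cs" using g by (cases cs) auto
  show "v_stat (cells cs) = length cs" by (simp add: v_stat_def columns_def cols_cells[OF g])
  have z: "0 \<in> fst ` set cs" using ex by force
  have m: "Min (fst ` set cs) = 0"
    using nn z by (intro Min_eqI) auto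
  have h0: "0 \<le> snd (hd cs)" using LL_hd[OF cs] by auto
  show "h_stat (cells cs) = topT cs + 1"
    using h0 by (simp add: h_stat_def rows_def rows_cells[OF g] m topT_def nat_add_distrib)
  have mc: "Min (columns (cells cs)) = 0" using len unfolding columns_def cols_cells[OF g]
    by (intro Min_eqI) auto
  have hd: "cs ! 0 = hd cs" using len by (simp add: hd_conv_nth)
  have "{y. (0, y) \<in> cells cs} = {fst (hd cs)..snd (hd cs)}" using col_cells[OF g len] hd by simp
  then show "c_stat (cells cs) = cnn cs" using LL_hd[OF cs]
    by (simp add: c_stat_def mc cnn_def)
qed


lemma inj_cells: "inj_on cells LL"
proof (rule inj_onI)
  fix cs1 cs2 assume c: "cs1 \<in> LL" "cs2 \<in> LL" "cells cs1 = cells cs2"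
  have g: "good cs1" "good cs2" using c LL_props by auto
  have "{0..<int (length cs1)} = {0..<int (length cs2)}" using cols_cells[OF g(1)] cols_cells[OF g(2)] c(3) by simp
  then have "card {0..<int (length cs1)} = card {0..<int (length cs2)}" by simp
  then have l: "length cs1 = length cs2" by simp
  show "cs1 = cs2"
  proof (rule nth_equalityI[OF l])
    fix j assume j: "j < length cs1"
    have e1: "{y. (int j, y) \<in> cells cs1} = {fst (cs1!j)..snd (cs1!j)}" by (rule col_cells[OF g(1) j])
    have e2: "{y. (int j, y) \<in> cells cs2} = {fst (cs2!j)..snd (cs2!j)}" using col_cells[OF g(2)] j l by simp
    have "{fst (cs1!j)..snd (cs1!j)} = {fst (cs2!j)..snd (cs2!j)}"
      unfolding e1[symmetric] e2[symmetric] c(3) ..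
    then have "fst (cs1!j) = fst (cs2!j) \<and> snd (cs1!j) = snd (cs2!j) \<or> \<not> fst (cs1!j) \<le> snd (cs1!j) \<and> \<not> fst (cs2!j) \<le> snd (cs2!j)"
      by (simp only: Icc_eq_Icc)
    then have "fst (cs1!j) = fst (cs2!j) \<and> snd (cs1!j) = snd (cs2!j)" using G1[OF g(1) j] by blast
    then show "cs1 ! j = cs2 ! j" by (simp add: prod_eq_iff)
  qed
qed



lemma cut_lemma:
  assumes c: "conn P" and p: "p \<in> P" and q: "q \<in> P" and a: "fst p \<le> a" "a < fst q"
  shows "\<exists>y. (a, y) \<in> P \<and> (a + 1, y) \<in> P"
proof (rule ccontr)
  assume H: "\<not> (\<exists>y. (a, y) \<in> P \<and> (a + 1, y) \<in> P)"
  have "fst u \<le> a" if "(adjR P)\<^sup>*\<^sup>* p u" for u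
    using that
  proof (induction rule: rtranclp_induct)
    case base then show ?case using a by simp
  next
    case (step y z)
    obtain y1 y2 z1 z2 where yz: "y = (y1, y2)" "z = (z1, z2)" by (cases y, cases z)
    have m: "y \<in> P" "z \<in> P" "\<bar>y1 - z1\<bar> + \<bar>y2 - z2\<bar> = 1"
      using step.hyps(2) yz by (auto simp: adjR_def edge_adj_def)
    show ?case
    proof (rule ccontr)
      assume "\<not> fst z \<le> a"
      then have "z1 = a + 1" "y1 = a" "y2 = z2" using m(3) step.IH yz by auto
      then show False using H m(1,2) yz by auto
    qed
  qed
  moreover have "(adjR P)\<^sup>*\<^sup>* p q" using c p q by (auto simp: conn_def)
  ultimately show False using a by fastforce
qed

lemma goodI:
  fixes f :: "nat \<Rightarrow> int \<times> int"
  assumes h1: "\<And>k. j \<le> k \<Longrightarrow> k < n \<Longrightarrow> fst (f k) \<le> snd (f k)"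
    and h2: "\<And>k. j \<le> k \<Longrightarrow> Suc k < n \<Longrightarrow> snd (f (Suc k)) \<le> snd (f k) \<and> fst (f k) \<le> snd (f (Suc k)) \<and>
              (fst (f (Suc k)) \<le> fst (f k) \<or> (\<forall>l. Suc k \<le> l \<longrightarrow> l < n \<longrightarrow> fst (f (Suc k)) \<le> fst (f l)))"
    and jn: "j < n"
  shows "good (map f [j..<n])"
  using h1 h2 jn
proof (induction "n - j" arbitrary: j)
  case 0 then show ?case by simp
next
  case (Suc m)
  show ?case
  proof (cases "Suc j = n")
    case True
    then have "[j..<n] = [j]" by (simp add: upt_rec)
    then show ?thesis using Suc.prems(1)[of j] True by simp
  next
    case False
    then have jn2: "Suc j < n" using Suc.prems(3) by simp
    have e1: "[j..<n] = j # [Suc j..<n]" using Suc.prems(3) by (simp add: upt_rec)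
    have e2: "[Suc j..<n] = Suc j # [Suc (Suc j)..<n]" using jn2 by (simp add: upt_rec)
    have IH: "good (map f [Suc j..<n])"
      by (rule Suc.hyps(1)) (use Suc.hyps(2) Suc.prems jn2 in auto)
    have st: "set (map f [Suc j..<n]) = f ` {Suc j..<n}" by simp
    have c: "snd (f (Suc j)) \<le> snd (f j) \<and> fst (f j) \<le> snd (f (Suc j)) \<and>
              (fst (f (Suc j)) \<le> fst (f j) \<or> (\<forall>l. Suc j \<le> l \<longrightarrow> l < n \<longrightarrow> fst (f (Suc j)) \<le> fst (f l)))"
      using Suc.prems(2)[of j] jn2 by simp
    have d: "fst (f j) \<le> snd (f j)" using Suc.prems(1)[of j] Suc.prems(3) by simp
    have "fst (f (Suc j)) \<le> fst (f j) \<or> (\<forall>s\<in>set (map f [Suc j..<n]). fst (f (Suc j)) \<le> fst s)"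
      using c unfolding st by auto
    then show ?thesis using IH c d unfolding e1 e2 by simp
  qed
qed

lemma CPu_cells:
  assumes P: "P \<in> CPu"
  shows "\<exists>cs\<in>LL. cells cs = P"
proof -
  have cp: "convex_poly P" and nz: "normalized P"
    and tops: "\<forall>j\<in>columns P. \<forall>s\<in>columns P. j < s \<longrightarrow> col_top P s \<le> col_top P j"
    using P by (auto simp: CPu_def)
  have pol: "finite P" "P \<noteq> {}" "conn P" using cp by (auto simp: convex_poly_def polyomino_iff)
  have colc: "\<And>a y1 y2 y. (a, y1) \<in> P \<Longrightarrow> (a, y2) \<in> P \<Longrightarrow> y1 \<le> y \<Longrightarrow> y \<le> y2 \<Longrightarrow> (a, y) \<in> P"
    using cp unfolding convex_poly_def by blast
  have rowc: "\<And>b x1 x2 x. (x1, b) \<in> P \<Longrightarrow> (x2, b) \<in> P \<Longrightarrow> x1 \<le> x \<Longrightarrow> x \<le> x2 \<Longrightarrow> (x, b) \<in> P"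
    using cp unfolding convex_poly_def by blast
  have nn: "\<And>a b. (a, b) \<in> P \<Longrightarrow> 0 \<le> a \<and> 0 \<le> b" using nz unfolding normalized_def by blast
  obtain b0 where b0: "(0, b0) \<in> P" using nz unfolding normalized_def by blast
  obtain a0 where a0: "(a0, 0) \<in> P" using nz unfolding normalized_def by blast
  define N where "N = Max (fst ` P)"
  have Nge: "\<And>u. u \<in> P \<Longrightarrow> fst u \<le> N" unfolding N_def using pol(1) by auto
  have "N \<in> fst ` P" unfolding N_def using pol(1,2) by (intro Max_in) auto
  then obtain qN where qN: "qN \<in> P" "fst qN = N" by auto
  have N0: "0 \<le> N" using Nge[OF b0] by simp
  define col where "col a = {y. (a, y) \<in> P}" for a
  have fin_col: "finite (col a)" for a
  proof -
    have "col a \<subseteq> snd ` P" by (force simp: col_def)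
    then show ?thesis using pol(1) finite_subset by blast
  qed
  have ne_col: "col a \<noteq> {}" if ha: "0 \<le> a" "a \<le> N" for a
  proof (cases "a = N")
    case True
    then have "(a, snd qN) \<in> P" using qN by (cases qN) auto
    then show ?thesis by (auto simp: col_def)
  next
    case False
    then have "a < fst qN" using that qN by auto
    then obtain y where "(a, y) \<in> P" using cut_lemma[OF pol(3) b0 qN(1)] ha by auto
    then show ?thesis by (auto simp: col_def)
  qed
  define bot where "bot a = Min (col a)" for a
  define top where "top a = Max (col a)" for a
  have bt: "(a, bot a) \<in> P \<and> (a, top a) \<in> P \<and> bot a \<le> top a" if "0 \<le> a" "a \<le> N" for a
  proof -
    have "bot a \<in> col a" "top a \<in> col a" using Min_in Max_in fin_col ne_col[OF that] by (auto simp: bot_def top_def)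
    moreover have "bot a \<le> top a" using fin_col ne_col[OF that] by (simp add: bot_def top_def)
    ultimately show ?thesis by (auto simp: col_def)
  qed
  have memP: "(a, y) \<in> P \<longleftrightarrow> 0 \<le> a \<and> a \<le> N \<and> bot a \<le> y \<and> y \<le> top a" for a y
  proof
    assume h: "(a, y) \<in> P"
    then have "y \<in> col a" by (simp add: col_def)
    then have "bot a \<le> y" "y \<le> top a" using fin_col by (auto simp: bot_def top_def)
    then show "0 \<le> a \<and> a \<le> N \<and> bot a \<le> y \<and> y \<le> top a" using nn[OF h] Nge[OF h] by auto
  next
    assume h: "0 \<le> a \<and> a \<le> N \<and> bot a \<le> y \<and> y \<le> top a"
    then show "(a, y) \<in> P" using bt[of a] colc[of a "bot a" "top a" y] by auto
  qed
  have ctop: "col_top P a = top a" for a by (simp add: col_top_def top_def col_def)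
  have topmono: "top s \<le> top j" if "0 \<le> j" "j < s" "s \<le> N" for j s
  proof -
    have "j \<in> columns P" "s \<in> columns P" using bt[of j] bt[of s] that unfolding columns_def by force+
    then show ?thesis using tops that ctop by auto
  qed
  have overlap: "\<exists>y. (k, y) \<in> P \<and> (k + 1, y) \<in> P" if "0 \<le> k" "k < N" for k
    using cut_lemma[OF pol(3) b0 qN(1)] that qN by auto
  define n where "n = Suc (nat N)"
  define f where "f k = (bot (int k), top (int k))" for k :: nat
  define cs where "cs = map f [0..<n]"
  have lencs: "length cs = n" by (simp add: cs_def)
  have nthcs: "k < n \<Longrightarrow> cs ! k = f k" for k by (simp add: cs_def)
  have kN: "k < n \<longleftrightarrow> int k \<le> N" for k using N0 by (auto simp: n_def)
  have cellsP: "cells cs = P"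
  proof (rule set_eqI)
    fix c :: "int \<times> int"
    obtain a y where c: "c = (a, y)" by (cases c)
    have "c \<in> cells cs \<longleftrightarrow> 0 \<le> a \<and> a \<le> N \<and> bot a \<le> y \<and> y \<le> top a"
    proof -
      have "c \<in> cells cs \<longleftrightarrow> 0 \<le> a \<and> a < int n \<and> fst (cs ! nat a) \<le> y \<and> y \<le> snd (cs ! nat a)"
        using c mem_cells lencs by simp
      also have "\<dots> \<longleftrightarrow> 0 \<le> a \<and> a \<le> N \<and> bot a \<le> y \<and> y \<le> top a"
      proof
        assume h: "0 \<le> a \<and> a < int n \<and> fst (cs ! nat a) \<le> y \<and> y \<le> snd (cs ! nat a)"
        then have "nat a < n" by linarith
        then show "0 \<le> a \<and> a \<le> N \<and> bot a \<le> y \<and> y \<le> top a" using h nthcs N0 by (auto simp: f_def n_def)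
      next
        assume h: "0 \<le> a \<and> a \<le> N \<and> bot a \<le> y \<and> y \<le> top a"
        then have "nat a < n" by (auto simp: n_def)
        then show "0 \<le> a \<and> a < int n \<and> fst (cs ! nat a) \<le> y \<and> y \<le> snd (cs ! nat a)"
          using h nthcs by (auto simp: f_def)
      qed
      finally show ?thesis .
    qed
    then show "c \<in> cells cs \<longleftrightarrow> c \<in> P" using memP c by simp
  qed
  have unimod: "bot (int k + 1) \<le> bot (int k + 1 + int d)"
    if "bot (int k) < bot (int k + 1)" "int k + 1 + int d \<le> N" for k d
    using that(2)
  proof (induction d)
    case 0 then show ?case by simp
  next
    case (Suc d)
    define l where "l = int k + 1 + int d"
    have IH: "bot (int k + 1) \<le> bot l" using Suc by (simp add: l_def)
    have lN: "l + 1 \<le> N" "0 \<le> l" using Suc.prems by (auto simp: l_def)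
    show ?case
    proof (rule ccontr)
      assume "\<not> bot (int k + 1) \<le> bot (int k + 1 + int (Suc d))"
      then have lt: "bot (l + 1) < bot (int k + 1)" by (simp add: l_def add.assoc)
      obtain y' where y': "(l, y') \<in> P" "(l + 1, y') \<in> P" using overlap[of l] lN by auto
      have "bot l \<le> y'" using y'(1) memP by blast
      moreover have "y' \<le> top (l + 1)" using y'(2) memP by blast
      ultimately have o1: "bot l \<le> top (l + 1)" by simp
      define y0 where "y0 = max (bot (int k)) (bot (l + 1))"
      have b1: "bot (l + 1) \<le> top (l + 1)" using bt[of "l + 1"] lN by auto
      have y0lt: "y0 < bot (int k + 1)" using lt that(1) by (simp add: y0_def)
      have y0le: "y0 \<le> top (l + 1)" using b1 o1 IH that(1) by (simp add: y0_def)
      have inl: "(l + 1, y0) \<in> P" using memP[of "l + 1" y0] lN y0le by (simp add: y0_def)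
      have tk: "top (l + 1) \<le> top (int k)" using topmono[of "int k" "l + 1"] lN by (simp add: l_def)
      have ink: "(int k, y0) \<in> P" using memP[of "int k" y0] lN y0le tk by (simp add: y0_def l_def)
      have "(int k + 1, y0) \<in> P" using rowc[OF ink inl] lN by (simp add: l_def)
      then have "bot (int k + 1) \<le> y0" using memP by blast
      then show False using y0lt by simp
    qed
  qed
  have gcs: "good cs" unfolding cs_def
  proof (rule goodI)
    fix k assume "0 \<le> k" "k < n"
    then show "fst (f k) \<le> snd (f k)" using bt[of "int k"] kN by (simp add: f_def)
  next
    fix k assume k: "0 \<le> k" "Suc k < n"
    then have kN1: "int k + 1 \<le> N" using kN[of "Suc k"] by simp
    have e: "f (Suc k) = (bot (int k + 1), top (int k + 1))" by (simp add: f_def add.commute)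
    have ek: "f k = (bot (int k), top (int k))" by (simp add: f_def)
    have a1: "snd (f (Suc k)) \<le> snd (f k)" using topmono[of "int k" "int k + 1"] kN1 unfolding e ek by simp
    obtain y where y: "(int k, y) \<in> P" "(int k + 1, y) \<in> P" using overlap[of "int k"] kN1 by auto
    have "bot (int k) \<le> y" using y(1) memP by blast
    moreover have "y \<le> top (int k + 1)" using y(2) memP by blast
    ultimately have a2: "fst (f k) \<le> snd (f (Suc k))" unfolding e ek by simp
    have a3: "fst (f (Suc k)) \<le> fst (f k) \<or> (\<forall>l. Suc k \<le> l \<longrightarrow> l < n \<longrightarrow> fst (f (Suc k)) \<le> fst (f l))"
    proof (cases "fst (f (Suc k)) \<le> fst (f k)")
      case True then show ?thesis by simp
    next
      case False
      then have lt: "bot (int k) < bot (int k + 1)" unfolding e ek by simp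
      have "fst (f (Suc k)) \<le> fst (f l)" if hl: "Suc k \<le> l" "l < n" for l
      proof -
        obtain d where d: "l = Suc k + d" using hl(1) le_Suc_ex by blast
        have il: "int l = int k + 1 + int d" using d by simp
        have "int l \<le> N" using hl(2) kN[of l] by simp
        then have "bot (int k + 1) \<le> bot (int l)" using unimod[OF lt, of d] unfolding il by simp
        then show ?thesis unfolding e by (simp add: f_def)
      qed
      then show ?thesis by simp
    qed
    show "snd (f (Suc k)) \<le> snd (f k) \<and> fst (f k) \<le> snd (f (Suc k)) \<and>
          (fst (f (Suc k)) \<le> fst (f k) \<or> (\<forall>l. Suc k \<le> l \<longrightarrow> l < n \<longrightarrow> fst (f (Suc k)) \<le> fst (f l)))"
      using a1 a2 a3 by simp
  qed (simp add: n_def)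
  have nncs: "\<forall>p\<in>set cs. 0 \<le> fst p"
  proof
    fix p assume "p \<in> set cs"
    then obtain k where k: "k < n" "p = f k" by (auto simp: cs_def)
    then show "0 \<le> fst p" using bt[of "int k"] kN[of k] nn[of "int k" "bot (int k)"] by (simp add: f_def)
  qed
  have a0N: "0 \<le> a0" "a0 \<le> N" using memP a0 by auto
  have "bot a0 \<le> 0" using memP a0 by auto
  moreover have "0 \<le> bot a0" using bt[OF a0N] nn by auto
  ultimately have "fst (f (nat a0)) = 0" using a0N by (simp add: f_def)
  moreover have "f (nat a0) \<in> set cs"
  proof -
    have "nat a0 < n" using a0N by (simp add: n_def)
    then show ?thesis using nthcs[of "nat a0"] nth_mem[of "nat a0" cs] lencs by simp
  qed
  ultimately have excs: "\<exists>p\<in>set cs. fst p = 0" by blast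
  have "cs \<in> LL" using gcs nncs excs by (simp add: LL_def)
  then show ?thesis using cellsP by blast
qed



lemma bij_cells: "bij_betw cells LL CPu"
proof -
  have "cells ` LL = CPu"
  proof
    show "cells ` LL \<subseteq> CPu" using cells_CPu by auto
    show "CPu \<subseteq> cells ` LL" using CPu_cells by (metis image_iff subsetI)
  qed
  then show ?thesis using inj_cells by (simp add: bij_betw_def)
qed

theorem lemma3p2:
  "\<exists>\<epsilon>>0. \<forall>x y z :: real. \<bar>x\<bar> < \<epsilon> \<and> \<bar>y\<bar> < \<epsilon> \<and> y \<noteq> 0 \<and> \<bar>z\<bar> < \<epsilon> \<longrightarrow>
     ((\<lambda>P. x ^ v_stat P * y ^ h_stat P * 1 ^ a_stat P * z ^ c_stat P) has_sum
       ((x*y*(z0 x y - z) + x^2*y^2*z*(1-z) / ((1-y*z)^2 - x)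
          - x^2*y^2*z0 x y*(1 - z0 x y) / ((1 - y*z0 x y)^2 - x))
        / ((1-z)*(1-y*z) + x*z))) CPu"
proof (intro exI[of _ "1/100"] conjI allI impI)
  show "(0::real) < 1/100" by simp
  fix x y z :: real
  assume a: "\<bar>x\<bar> < 1/100 \<and> \<bar>y\<bar> < 1/100 \<and> y \<noteq> 0 \<and> \<bar>z\<bar> < 1/100"
  have a1: "\<bar>x\<bar> \<le> 1/100" "\<bar>y\<bar> \<le> 1/100" "y \<noteq> 0" "\<bar>z\<bar> \<le> 1/100" "\<bar>z\<bar> \<le> 2" using a by auto
  define f where "f P = x ^ v_stat P * y ^ h_stat P * 1 ^ a_stat P * z ^ c_stat P" for P
  have fw: "f (cells cs) = wt x y z cs" if "cs \<in> LL" for cs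
    using stats_cells[OF that] by (simp add: f_def wt_def)
  have "(wt x y z has_sum CC x y z) LL"
    unfolding CC_def using summ_wt[OF a1(1,2,5)] by simp
  then have "((\<lambda>cs. f (cells cs)) has_sum CC x y z) LL"
    by (rule has_sum_cong[THEN iffD2, rotated]) (use fw in auto)
  then have "(f has_sum CC x y z) CPu" using has_sum_reindex_bij_betw[OF bij_cells] by blast
  then have "(f has_sum ((x*y*(z0 x y - z) + x^2*y^2*z*(1-z) / ((1-y*z)^2 - x)
          - x^2*y^2*z0 x y*(1 - z0 x y) / ((1 - y*z0 x y)^2 - x))
        / ((1-z)*(1-y*z) + x*z))) CPu" using CC_formula[OF a1(1-4)] by simp
  moreover have "f = (\<lambda>P. x ^ v_stat P * y ^ h_stat P * 1 ^ a_stat P * z ^ c_stat P)"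
    by (simp add: fun_eq_iff f_def)
  ultimately show "((\<lambda>P. x ^ v_stat P * y ^ h_stat P * 1 ^ a_stat P * z ^ c_stat P) has_sum
       ((x*y*(z0 x y - z) + x^2*y^2*z*(1-z) / ((1-y*z)^2 - x)
          - x^2*y^2*z0 x y*(1 - z0 x y) / ((1 - y*z0 x y)^2 - x))
        / ((1-z)*(1-y*z) + x*z))) CPu"
    by simp
qed

end
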